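(* Let $c\ge 1$ be an integer and consider the equivalence relation on permutations generated by the replacement partition of $S_{c+1}$ whose only nontrivial part is $\{x\in S_{c+1}: x_1=1\}$. For positive integers $k,n$ let $g(k,n)$ be the number of equivalence classes in $S_n$ containing at least one $k$-squished permutation. Then $$g(k,n)=\begin{cases} (n-1)!, & n<c+1,\\ 1, & c+1\le n\le ck+1,\\ \displaystyle g(k+1,n)+\sum_{j=ck+2}^{n} g(k,j-1)\, g(1,n-j+1)\binom{n-k-1}{n-j}, & n>ck+1.\end{cases}$$
   Context: Permutations are written in one-line notation as words. The order permutation (standardization) of a word $u$ of distinct positive integers of length $\ell$ is the unique $\pi\in S_\ell$ with $\pi_i<\pi_j$ iff $u_i<u_j$. The equivalence is generated by declaring $\phi\equiv\psi$ whenever $\phi=aub$ and $\psi=avb$ for words $a,b,u,v$ with $u,v$ of length $c+1$ whose order permutations both begin with $1$. A permutation of $S_n$ is $k$-squished if for each $j\le k$, the letter $j$ occurs among the first $c(j-1)+1$ positions. *)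

theory Defs
  imports Main
begin

definition perms :: "nat \<Rightarrow> nat list set" where
  "perms n = {xs. distinct xs \<and> set xs = {1..n}}"

definition stdz :: "nat list \<Rightarrow> nat list" where
  "stdz u = map (\<lambda>x. card {y \<in> set u. y \<le> x}) u"

definition rstep :: "nat \<Rightarrow> nat list \<Rightarrow> nat list \<Rightarrow> bool" where
  "rstep c phi psi \<longleftrightarrow> (\<exists>a u v b. phi = a @ u @ b \<and> psi = a @ v @ b \<and>
      length u = c + 1 \<and> length v = c + 1 \<and>
      hd (stdz u) = 1 \<and> hd (stdz v) = 1)"

definition requiv :: "nat \<Rightarrow> nat \<Rightarrow> (nat list \<times> nat list) set" where
  "requiv c n = {(phi, psi). phi \<in> perms n \<and> psi \<in> perms n \<and>
      (\<lambda>x y. x \<in> perms n \<and> y \<in> perms n \<and> rstep c x y)\<^sup>*\<^sup>* phi psi}"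

definition squished :: "nat \<Rightarrow> nat \<Rightarrow> nat list \<Rightarrow> bool" where
  "squished c k phi \<longleftrightarrow> (\<forall>j. 1 \<le> j \<and> j \<le> k \<and> j \<le> length phi \<longrightarrow>
      j \<in> set (take (c * (j - 1) + 1) phi))"

definition gcount :: "nat \<Rightarrow> nat \<Rightarrow> nat \<Rightarrow> nat" where
  "gcount c k n = card {C \<in> perms n // requiv c n. \<exists>phi \<in> C. squished c k phi}"

end

theory Submission
  imports Defs "HOL-Combinatorics.Multiset_Permutations"
begin

definition mv :: "nat \<Rightarrow> nat list \<Rightarrow> nat list \<Rightarrow> bool" where
  "mv c x y \<longleftrightarrow> rstep c x y \<and> distinct x \<and> distinct y \<and> set x = set y"

abbreviation eqv :: "nat \<Rightarrow> nat list \<Rightarrow> nat list \<Rightarrow> bool" where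
  "eqv c \<equiv> (mv c)\<^sup>*\<^sup>*"

lemma hd_stdz: "u \<noteq> [] \<Longrightarrow> hd (stdz u) = 1 \<longleftrightarrow> (\<forall>z\<in>set u. hd u \<le> z)"
proof -
  assume u: "u \<noteq> []"
  have hs: "hd (stdz u) = card {y \<in> set u. y \<le> hd u}"
    using u by (cases u) (auto simp: stdz_def)
  have fin: "finite {y \<in> set u. y \<le> hd u}" by simp
  have mem: "hd u \<in> {y \<in> set u. y \<le> hd u}" using u by simp
  show ?thesis
  proof
    assume "hd (stdz u) = 1"
    then have "card {y \<in> set u. y \<le> hd u} = 1" using hs by simp
    then obtain w where w: "{y \<in> set u. y \<le> hd u} = {w}" using card_1_singletonE by blast
    show "\<forall>z\<in>set u. hd u \<le> z"
    proof
      fix z assume "z \<in> set u"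
      show "hd u \<le> z"
      proof (rule ccontr)
        assume "\<not> hd u \<le> z"
        then have "z \<in> {y \<in> set u. y \<le> hd u}" using \<open>z \<in> set u\<close> by simp
        then show False using w mem \<open>\<not> hd u \<le> z\<close> by auto
      qed
    qed
  next
    assume "\<forall>z\<in>set u. hd u \<le> z"
    then have "{y \<in> set u. y \<le> hd u} = {hd u}" using u by (auto intro: antisym)
    then show "hd (stdz u) = 1" using hs by simp
  qed
qed

lemma mv_sym: "mv c x y \<Longrightarrow> mv c y x"
  unfolding mv_def rstep_def by blast

lemma eqv_sym: "eqv c x y \<Longrightarrow> eqv c y x"
  by (induction rule: rtranclp_induct) (auto intro: mv_sym converse_rtranclp_into_rtranclp)

lemma mvE:
  assumes "mv c x y"
  obtains a u v b where "x = a @ u @ b" "y = a @ v @ b" "length u = c + 1" "length v = c + 1"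
    "\<forall>z\<in>set u. hd u \<le> z" "\<forall>z\<in>set v. hd v \<le> z" "set u = set v" "hd u = hd v"
    "distinct x" "distinct y" "set x = set y"
proof -
  from assms obtain a u v b where x: "x = a @ u @ b" and y: "y = a @ v @ b" and
    lu: "length u = c + 1" and lv: "length v = c + 1" and
    hu: "hd (stdz u) = 1" and hv: "hd (stdz v) = 1" and dx: "distinct x" and dy: "distinct y"
    and sxy: "set x = set y"
    unfolding mv_def rstep_def by blast
  have un: "u \<noteq> []" "v \<noteq> []" using lu lv by auto
  have mu: "\<forall>z\<in>set u. hd u \<le> z" using hd_stdz[OF un(1)] hu by simp
  have mvv: "\<forall>z\<in>set v. hd v \<le> z" using hd_stdz[OF un(2)] hv by simp
  have suv: "set u = set v"
  proof -
    have "set u = set x - set a - set b" using dx x by auto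
    moreover have "set v = set y - set a - set b" using dy y by auto
    ultimately show ?thesis using sxy by simp
  qed
  have "hd u = hd v"
  proof (rule antisym)
    show "hd u \<le> hd v" using mu suv un(2) by (metis hd_in_set)
    show "hd v \<le> hd u" using mvv suv un(1) by (metis hd_in_set)
  qed
  then show ?thesis using that x y lu lv mu mvv suv dx dy sxy by blast
qed

lemma mvI:
  assumes "x = a @ u @ b" "y = a @ v @ b" "length u = c + 1" "length v = c + 1"
    "\<forall>z\<in>set u. hd u \<le> z" "\<forall>z\<in>set v. hd v \<le> z" "set u = set v"
    "distinct x" "distinct y"
  shows "mv c x y"
proof -
  have un: "u \<noteq> []" "v \<noteq> []" using assms(3,4) by auto
  show ?thesis unfolding mv_def rstep_def
    using assms hd_stdz[OF un(1)] hd_stdz[OF un(2)] by auto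
qed

lemma mv_set: "mv c x y \<Longrightarrow> set y = set x \<and> length y = length x \<and> distinct y"
  by (erule mvE) auto

lemma eqv_set: "eqv c x y \<Longrightarrow> set y = set x \<and> length y = length x \<and> (distinct x \<longrightarrow> distinct y)"
  by (induction rule: rtranclp_induct) (auto dest: mv_set)

lemma mv_lift: "mv c x y \<Longrightarrow> distinct (p @ x @ q) \<Longrightarrow> mv c (p @ x @ q) (p @ y @ q)"
proof -
  assume m: "mv c x y" and d: "distinct (p @ x @ q)"
  from m obtain a u v b where x: "x = a @ u @ b" and y: "y = a @ v @ b" and
    l: "length u = c + 1" "length v = c + 1" and h: "\<forall>z\<in>set u. hd u \<le> z" "\<forall>z\<in>set v. hd v \<le> z"
    and s: "set u = set v" and dy: "distinct y" and sxy: "set x = set y"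
    by (rule mvE) blast
  have "distinct (p @ y @ q)" using d dy sxy by auto
  then show ?thesis
    by (intro mvI[where a="p @ a" and b="b @ q" and u=u and v=v]) (use x y l h s d in auto)
qed

lemma eqv_lift: "eqv c x y \<Longrightarrow> distinct (p @ x @ q) \<Longrightarrow> eqv c (p @ x @ q) (p @ y @ q)"
proof (induction rule: rtranclp_induct)
  case base then show ?case by simp
next
  case (step y z)
  have "distinct (p @ y @ q)" using eqv_set[OF step.hyps(1)] step.prems by auto
  then have "mv c (p @ y @ q) (p @ z @ q)" using mv_lift step.hyps(2) by blast
  then show ?case using step by (meson rtranclp.rtrancl_into_rtrancl)
qed


lemma sq_pos: "squished c k xs \<longleftrightarrow>
   (\<forall>j. 1 \<le> j \<and> j \<le> k \<and> j \<le> length xs \<longrightarrow> (\<exists>i<length xs. i \<le> c*(j-1) \<and> xs!i = j))"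
proof -
  have "j \<in> set (take (c * (j - 1) + 1) xs) \<longleftrightarrow> (\<exists>i<length xs. i \<le> c*(j-1) \<and> xs!i = j)" for j
    by (auto simp: in_set_conv_nth less_Suc_eq_le)
  then show ?thesis unfolding squished_def by simp
qed

lemma sq_mono: "squished c k xs \<Longrightarrow> k' \<le> k \<Longrightarrow> squished c k' xs"
  unfolding squished_def by auto

lemma distinct_idx: "distinct xs \<Longrightarrow> i < length xs \<Longrightarrow> i' < length xs \<Longrightarrow> xs!i = xs!i' \<Longrightarrow> i = i'"
  by (simp add: nth_eq_iff_index_eq)

lemma nth_mid1: "i < length a \<Longrightarrow> (a @ u @ b) ! i = a ! i"
  by (simp add: nth_append)
lemma nth_mid2: "t < length u \<Longrightarrow> (a @ u @ b) ! (length a + t) = u ! t"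
  by (simp add: nth_append)
lemma nth_mid3: "length a + length u \<le> i \<Longrightarrow> (a @ u @ b) ! i = b ! (i - length a - length u)"
  using nth_append_right[of "a @ u" i b] by (simp add: diff_diff_left)

lemma sq_idx:
  assumes "squished c k x" "distinct x" "1 \<le> j" "j \<le> k" "j \<le> length x" "i < length x" "x!i = j"
  shows "i \<le> c*(j-1)"
proof -
  obtain i' where "i' < length x" "i' \<le> c*(j-1)" "x!i' = j" using assms(1,3,4,5) unfolding sq_pos by blast
  then show ?thesis using distinct_idx[OF assms(2)] assms(6,7) by metis
qed

lemma sq_closed:
  assumes m: "mv c x y" and z: "0 \<notin> set x" and s: "squished c k x"
  shows "squished c k y"
proof -
  from m obtain a u v b where x: "x = a @ u @ b" and y: "y = a @ v @ b" and
    lu: "length u = c + 1" and lv: "length v = c + 1" and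
    hu: "\<forall>z\<in>set u. hd u \<le> z" and hv: "\<forall>z\<in>set v. hd v \<le> z" and suv: "set u = set v"
    and huv: "hd u = hd v" and dx: "distinct x" and dy: "distinct y" and sxy: "set x = set y"
    by (rule mvE) blast
  have lxy: "length x = length y" using x y lu lv by simp
  show ?thesis unfolding sq_pos
  proof (intro allI impI)
    fix j assume j: "1 \<le> j \<and> j \<le> k \<and> j \<le> length y"
    obtain i0 where "i0 < length x" "x!i0 = j" using s j lxy unfolding sq_pos by fastforce
    then have "j \<in> set y" using sxy nth_mem by metis
    then obtain i where i: "i < length y" "y!i = j" by (metis in_set_conv_nth)
    have same: "i \<le> c*(j-1)" if "x!i = j"
      using sq_idx[OF s dx, of j i] j i lxy that by simp
    have "i \<le> c*(j-1)"
    proof (cases "i < length a")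
      case True
      then show ?thesis using same i x y by (simp add: nth_mid1)
    next
      case False
      show ?thesis
      proof (cases "length a + length u \<le> i")
        case True
        then show ?thesis using same i x y lu lv by (simp add: nth_mid3)
      next
        case False2: False
        define t where "t = i - length a"
        have it: "i = length a + t" "t < c + 1" using False False2 lu t_def by auto
        show ?thesis
        proof (cases "t = 0")
          case True
          have "y!i = hd v" using it True y lv by (cases v) (auto simp: nth_append)
          moreover have "x!i = hd u" using it True x lu by (cases u) (auto simp: nth_append)
          ultimately show ?thesis using same huv i by simp
        next
          case False
          have yi: "y!i = v!t" using it y lv by (simp add: nth_append)
          have ya: "y!(length a) = hd v" using y lv by (cases v) (auto simp: nth_append)
          have xa: "x!(length a) = hd u" using x lu by (cases u) (auto simp: nth_append)
          have la: "length a < length y" using y lv by simp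
          have "j \<in> set v" using yi i it lv by (metis nth_mem)
          then have mle: "hd u \<le> j" using hv huv by simp
          have mne: "hd u \<noteq> j"
          proof
            assume "hd u = j"
            then have "y!(length a) = y!i" using ya huv i by simp
            then have "length a = i" using distinct_idx[OF dy la i(1)] by simp
            then show False using it False by simp
          qed
          have m1: "1 \<le> hd u"
          proof -
            have "hd u \<in> set x" using x lu by (metis Un_iff hd_in_set list.size(3) set_append add_eq_0_iff_both_eq_0 one_neq_zero)
            then show ?thesis using z by (metis less_one not_le)
          qed
          have "length a \<le> c*(hd u - 1)"
            using sq_idx[OF s dx m1, of "length a"] mle mne j xa la lxy by simp
          then have "i \<le> c*(hd u - 1) + c" using it by simp
          also have "\<dots> = c * hd u" using m1 by (cases "hd u") (auto simp: algebra_simps)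
          also have "\<dots> \<le> c*(j-1)" using mle mne by (intro mult_le_mono2) simp
          finally show ?thesis .
        qed
      qed
    qed
    then show "\<exists>i<length y. i \<le> c*(j-1) \<and> y!i = j" using i by blast
  qed
qed

lemma eqv_sq_closed: "eqv c x y \<Longrightarrow> 0 \<notin> set x \<Longrightarrow> squished c k x \<Longrightarrow> squished c k y"
proof (induction rule: rtranclp_induct)
  case base then show ?case by simp
next
  case (step y z)
  then show ?case using sq_closed eqv_set by metis
qed


lemma mv_split:
  assumes m: "mv c (p @ q) y" and qn: "q \<noteq> []"
    and h: "\<forall>i. length p - c \<le> i \<longrightarrow> i < length p \<longrightarrow> hd q < p!i"
  shows "\<exists>p' q'. y = p' @ q' \<and> length p' = length p \<and>
           ((mv c p p' \<and> q' = q) \<or> (p' = p \<and> mv c q q'))"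
proof -
  from m obtain a u v b where x: "p @ q = a @ u @ b" and y: "y = a @ v @ b" and
    lu: "length u = c + 1" and lv: "length v = c + 1" and
    hu: "\<forall>z\<in>set u. hd u \<le> z" and hv: "\<forall>z\<in>set v. hd v \<le> z" and suv: "set u = set v"
    and huv: "hd u = hd v" and dx: "distinct (p @ q)" and dy: "distinct y" and "set (p @ q) = set y"
    by (rule mvE)
  have dp: "distinct p" and dq: "distinct q" using dx by auto
  obtain us where
    "(p = a @ us \<and> us @ q = u @ b) \<or> (p @ us = a \<and> q = us @ u @ b)"
    using append_eq_append_conv2[of p q a "u @ b", THEN iffD1, OF x] by blast
  then show ?thesis
  proof
    assume c1: "p = a @ us \<and> us @ q = u @ b"
    obtain ws where
      "(us = u @ ws \<and> ws @ q = b) \<or> (us @ ws = u \<and> q = ws @ b)"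
      using append_eq_append_conv2[of us q u b, THEN iffD1, OF c1[THEN conjunct2]] by blast
    then show ?thesis
    proof
      assume c2: "us = u @ ws \<and> ws @ q = b"
      have pp: "p = a @ u @ ws" using c1 c2 by simp
      have yy: "y = (a @ v @ ws) @ q" using y c2 by simp
      have dp': "distinct (a @ v @ ws)" using dy yy by (simp only: distinct_append)
      have "mv c p (a @ v @ ws)" by (rule mvI[OF pp refl lu lv hu hv suv dp dp'])
      moreover have "length (a @ v @ ws) = length p" using pp lu lv by simp
      ultimately show ?thesis using yy by blast
    next
      assume c2: "us @ ws = u \<and> q = ws @ b"
      show ?thesis
      proof (cases "us = []")
        case True
        have pp: "p = a" using c1 True by simp
        have qq: "q = [] @ u @ b" using c2 True by simp
        have yy: "y = p @ ([] @ v @ b)" using y pp by simp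
        have dq': "distinct ([] @ v @ b)" using dy yy by (simp only: distinct_append)
        have "mv c q ([] @ v @ b)" by (rule mvI[OF qq refl lu lv hu hv suv dq dq'])
        then show ?thesis using yy by blast
      next
        case usn: False
        show ?thesis
        proof (cases "ws = []")
          case True
          have pp: "p = a @ u @ []" using c1 c2 True by simp
          have qq: "q = b" using c2 True by simp
          have yy: "y = (a @ v @ []) @ q" using y qq by simp
          have dp': "distinct (a @ v @ [])" using dy yy by (simp only: distinct_append)
          have "mv c p (a @ v @ [])" by (rule mvI[OF pp refl lu lv hu hv suv dp dp'])
          moreover have "length (a @ v @ []) = length p" using pp lu lv by simp
          ultimately show ?thesis using yy by blast
        next
          case wsn: False
          have "hd q = hd ws" using c2 wsn by simp
          moreover have "hd ws \<in> set u" using c2 wsn by (metis hd_in_set list.set_intros(1) set_append Un_iff)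
          ultimately have le: "hd u \<le> hd q" using hu by simp
          have hu2: "hd u = hd us" using c2 usn by (metis hd_append2)
          have hup: "hd us = p ! length a" using c1 usn by (simp add: nth_append hd_conv_nth)
          have "length us + length ws = c + 1" using c2 lu by (metis length_append)
          then have "length us \<le> c" using wsn by (cases ws) auto
          then have "length p - c \<le> length a" "length a < length p" using c1 usn by auto
          then have "hd q < p ! length a" using h by blast
          then show ?thesis using le hup hu2 by simp
        qed
      qed
    qed
  next
    assume c1: "p @ us = a \<and> q = us @ u @ b"
    have qq: "q = us @ u @ b" using c1 by simp
    have yy: "y = p @ (us @ v @ b)" using y c1 by simp
    have dq': "distinct (us @ v @ b)" using dy yy by (simp only: distinct_append)
    have "mv c q (us @ v @ b)" by (rule mvI[OF qq refl lu lv hu hv suv dq dq'])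
    then show ?thesis using yy by blast
  qed
qed

lemma mv_hd: "mv c q q' \<Longrightarrow> hd q' = hd q"
proof -
  assume "mv c q q'"
  then obtain a u v b where "q = a @ u @ b" "q' = a @ v @ b" "length u = c + 1" "length v = c + 1"
    "hd u = hd v" by (rule mvE) blast
  then show ?thesis by (cases a; cases u; cases v) auto
qed

lemma eqv_hd: "eqv c q q' \<Longrightarrow> hd q' = hd q"
  by (induction rule: rtranclp_induct) (auto dest: mv_hd)

lemma sls_id: "sorted_wrt (<) l \<Longrightarrow> sorted_list_of_set (set l) = (l::nat list)"
  by (metis sorted_list_of_set.idem_if_sorted_distinct strict_sorted_iff)

lemma sls_snoc:
  assumes "finite A" "\<forall>a\<in>A. a < (m::nat)"
  shows "sorted_list_of_set (insert m A) = sorted_list_of_set A @ [m]"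
proof -
  have "sorted_wrt (<) (sorted_list_of_set A @ [m])"
    using assms by (simp add: sorted_wrt_append)
  then have "sorted_list_of_set (set (sorted_list_of_set A @ [m])) = sorted_list_of_set A @ [m]"
    by (rule sls_id)
  then show ?thesis using assms by simp
qed

lemma sq_butlast:
  assumes "squished c k (p @ [v])" "k < v"
  shows "squished c k p"
  unfolding sq_pos
proof (intro allI impI)
  fix j assume j: "1 \<le> j \<and> j \<le> k \<and> j \<le> length p"
  then obtain i where i: "i < length (p @ [v])" "i \<le> c*(j-1)" "(p @ [v])!i = j"
    using assms(1) unfolding sq_pos by fastforce
  have "i \<noteq> length p" using i(3) j assms(2) by auto
  then have "i < length p" using i(1) by simp
  then show "\<exists>i<length p. i \<le> c*(j-1) \<and> p!i = j" using i by (auto simp: nth_append)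
qed


lemma sls_props:
  fixes A :: "nat set"
  assumes "finite A"
  shows "set (sorted_list_of_set A) = A" "distinct (sorted_list_of_set A)"
    "length (sorted_list_of_set A) = card A" "sorted_wrt (<) (sorted_list_of_set A)"
  using assms by (simp_all add: strict_sorted_list_of_set)

lemma G_base:
  assumes dx: "distinct x" and z: "0 \<notin> set x" and l: "length x = c + 1" and k: "1 \<le> k"
    and s: "squished c k x"
  shows "mv c x (sorted_list_of_set (set x))"
proof -
  define S where "S = sorted_list_of_set (set x)"
  have xn: "x \<noteq> []" using l by auto
  obtain i where "i < length x" "i \<le> c*(1-1)" "x!i = 1" using s k xn unfolding sq_pos
    by (metis le_refl length_greater_0_conv less_one not_le)
  then have hx: "hd x = 1" using xn by (simp add: hd_conv_nth)
  have fx: "finite (set x)" by simp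
  have sS: "set S = set x" and dS: "distinct S" and lS: "length S = length x"
    using sls_props[OF fx] dx by (simp_all add: S_def distinct_card)
  have Sn: "S \<noteq> []" using lS xn by auto
  have hS: "\<forall>z\<in>set S. hd S \<le> z"
    using sorted_list_of_set_nonempty[OF fx] xn S_def by auto
  have hxx: "\<forall>z\<in>set x. hd x \<le> z" using z hx by (metis not_le less_one)
  show ?thesis unfolding S_def[symmetric]
    by (rule mvI[of x "[]" x "[]" S S]) (use l lS hS hxx sS dx dS in simp_all)
qed

lemma k_arith:
  fixes c n :: nat
  assumes c: "1 \<le> c" and n: "c + 2 \<le> n"
  defines "k' \<equiv> (n - 2) div c + 1"
  shows "c * (k' - 1) + 2 \<le> n" "n \<le> c * k' + 1" "1 \<le> k'" "c + k' \<le> n"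
proof -
  have a: "c * ((n - 2) div c) \<le> n - 2" by simp
  have b: "n - 2 < c * ((n - 2) div c + 1)"
    using c by (metis add.commute div_mult_mod_eq mod_less_divisor mult.commute
      mult_Suc_right nat_add_left_cancel_less not_one_le_zero not_gr0 plus_1_eq_Suc)
  have km: "k' - 1 = (n - 2) div c" by (simp add: k'_def)
  show "c * (k' - 1) + 2 \<le> n" using a n unfolding km by linarith
  have "n \<le> c * ((n - 2) div c + 1) + 1" using b n by linarith
  then show "n \<le> c * k' + 1" unfolding k'_def by simp
  show "1 \<le> k'" unfolding k'_def by simp
  show "c + k' \<le> n"
  proof (cases "(n - 2) div c = 0")
    case True then show ?thesis using n unfolding k'_def by simp
  next
    case False
    define q where "q = (n - 2) div c"
    have q1: "1 \<le> q" using False q_def by simp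
    have "c * q = (c - 1) * q + q" using c by (simp add: algebra_simps)
    moreover have "(c - 1) * q \<ge> c - 1" using q1 by simp
    ultimately have "c * q \<ge> c - 1 + q" by simp
    then show ?thesis using a n c unfolding k'_def q_def[symmetric] by simp
  qed
qed

lemma sq_last_gt:
  assumes s: "squished c k x" and dx: "distinct x" and z: "0 \<notin> set x" and xn: "x \<noteq> []"
    and lt: "c * (k - 1) + 1 < length x" and c1: "1 \<le> c"
  shows "k < last x"
proof (rule ccontr)
  assume "\<not> k < last x"
  then have vk: "last x \<le> k" by simp
  have v1: "1 \<le> last x" using z xn by (metis last_in_set less_one not_le)
  have "k - 1 \<le> c * (k - 1)" using c1 by simp
  then have "last x \<le> length x" using vk lt by linarith
  moreover have "x ! (length x - 1) = last x" using xn by (simp add: last_conv_nth)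
  ultimately have "length x - 1 \<le> c * (last x - 1)"
    using sq_idx[OF s dx v1 vk] xn by simp
  also have "\<dots> \<le> c * (k - 1)" using vk by (intro mult_le_mono2) simp
  finally show False using lt by simp
qed

lemma last_sorted_Max: "sorted_wrt (<) (D::nat list) \<Longrightarrow> D \<noteq> [] \<Longrightarrow> last D = Max (set D)"
proof (induction D)
  case Nil then show ?case by simp
next
  case (Cons a D)
  show ?case
  proof (cases "D = []")
    case True then show ?thesis by simp
  next
    case False
    then have "last D = Max (set D)" using Cons by simp
    moreover have "a < Max (set D)" using Cons.prems False by simp
    ultimately show ?thesis using False by (simp add: max_def)
  qed
qed

lemma G:
  assumes "distinct x" "0 \<notin> set x" "c + 1 \<le> length x" "length x \<le> c * k + 1" "1 \<le> k"
    "squished c k x"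
  shows "eqv c x (sorted_list_of_set (set x))"
  using assms
proof (induction "length x" arbitrary: x k rule: less_induct)
  case less
  note dx = less.prems(1) and z = less.prems(2) and sq = less.prems(6)
  define n where "n = length x"
  show ?case
  proof (cases "n = c + 1")
    case True
    then show ?thesis using G_base[OF dx z _ less.prems(5) sq] n_def by auto
  next
    case False
    have n2: "c + 2 \<le> n" using False less.prems(3) n_def by simp
    have c1: "1 \<le> c"
    proof (rule ccontr)
      assume "\<not> 1 \<le> c" then have "c = 0" by simp
      then show False using n2 less.prems(4) n_def by simp
    qed
    define k' where "k' = (n - 2) div c + 1"
    note ka = k_arith[OF c1 n2, folded k'_def]
    have kk: "k' \<le> k"
    proof (rule ccontr)
      assume "\<not> k' \<le> k"
      then have "k + 1 \<le> k'" by simp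
      then have "c * k \<le> c * (k' - 1)" by (intro mult_le_mono2) simp
      then show False using ka(1) less.prems(4) n_def by linarith
    qed
    have sq': "squished c k' x" using sq_mono[OF sq kk] .
    have xn: "x \<noteq> []" using n2 n_def by auto
    define v where "v = last x"
    define p where "p = butlast x"
    have xp: "x = p @ [v]" using xn by (simp add: p_def v_def)
    have vk: "k' < v" unfolding v_def using sq_last_gt[OF sq' dx z xn _ c1] ka(1) n_def by simp
    have lp: "length p = n - 1" using n_def p_def by simp
    have dp: "distinct p" and vp: "v \<notin> set p" using dx xp by auto
    have zp: "0 \<notin> set p" using z xp by auto
    have sqp: "squished c k' p" using sq_butlast[OF sq'[unfolded xp] vk] .
    have sxp: "set x = insert v (set p)" using xp by simp
    have IHp: "eqv c p (sorted_list_of_set (set p))"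
      using less.hyps[of p k'] lp n_def n2 dp zp ka sqp by simp
    have low: "{1..k'} \<subseteq> set p"
    proof
      fix j assume j: "j \<in> {1..k'}"
      have "j \<le> length x" using j ka(4) n_def by simp
      then obtain i where "i < length x" "x!i = j" using sq' j unfolding sq_pos by fastforce
      then have "j \<in> set x" by (metis nth_mem)
      then show "j \<in> set p" using sxp vk j by auto
    qed
    define M where "M = Max (set x)"
    have fx: "finite (set x)" by simp
    have Mx: "M \<in> set x" using xn fx M_def by simp
    have Mge: "\<forall>y\<in>set x. y \<le> M" using fx M_def by simp
    show ?thesis
    proof (cases "v = M")
      case True
      have "sorted_list_of_set (set x) = sorted_list_of_set (set p) @ [v]"
      proof -
        have "\<forall>a\<in>set p. a < v" using Mge True sxp vp by (metis insert_iff le_neq_implies_less)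
        then show ?thesis using sls_snoc[of "set p" v] sxp by simp
      qed
      moreover have "eqv c (p @ [v]) (sorted_list_of_set (set p) @ [v])"
        using eqv_lift[OF IHp, of "[]" "[v]"] dx xp by simp
      ultimately show ?thesis using xp by simp
    next
      case False
      have vM: "v < M" using False Mge sxp by auto
      have Mp: "M \<in> set p" using Mx False sxp by simp
      define Y where "Y = set p - {1..k'}"
      define D where "D = sorted_list_of_set Y"
      define t where "t = n - c - k'"
      have fY: "finite Y" by (simp add: Y_def)
      have sD: "set D = Y" and dD: "distinct D" and sortD: "sorted_wrt (<) D"
        using sls_props[OF fY] by (simp_all add: D_def)
      have cY: "card Y = n - 1 - k'"
      proof -
        have "card Y = card (set p) - card {1..k'}" unfolding Y_def using low by (simp add: card_Diff_subset)
        then show ?thesis using dp lp by (simp add: distinct_card)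
      qed
      have lD: "length D = n - 1 - k'" using cY sD dD by (metis distinct_card)
      have MY: "M \<in> Y" using Mp vM vk Y_def by auto
      have Ygt: "\<forall>y\<in>Y. k' < y" using Y_def zp by (auto simp: not_le)
      have c2: "2 \<le> c"
      proof (rule ccontr)
        assume "\<not> 2 \<le> c"
        then have "c = 1" using c1 by simp
        then have "k' = n - 1" using k'_def n2 by simp
        then have "card Y = 0" using cY by simp
        then show False using MY fY by auto
      qed
      define d2 where "d2 = drop t D"
      have ld2: "length d2 = c - 1" using lD ka(4) d2_def t_def by simp
      have d2n: "d2 \<noteq> []" using ld2 c2 by auto
      have lastD: "last d2 = M"
      proof -
        have DnE: "D \<noteq> []" using d2n d2_def by auto
        have "last D = Max (set D)" using last_sorted_Max[OF sortD DnE] .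
        also have "\<dots> = M"
        proof (rule Max_eqI)
          show "finite (set D)" by simp
          show "M \<in> set D" using MY sD by simp
          show "\<And>y. y \<in> set D \<Longrightarrow> y \<le> M" using sD Y_def sxp Mge by auto
        qed
        finally show ?thesis using d2n d2_def by (simp add: last_drop)
      qed
      have tD: "t \<le> length D" using lD t_def ka(4) c1 by simp
      have Dtd: "take t D @ d2 = D" by (simp add: d2_def)
      define r where "r = [1..<k'] @ take t D @ [k'] @ d2"
      define x1 where "x1 = r @ [v]"
      have sr: "set r = set p"
      proof -
        have "set r = {1..<k'} \<union> (set (take t D) \<union> set d2) \<union> {k'}" by (auto simp: r_def)
        also have "set (take t D) \<union> set d2 = Y" using Dtd sD by (metis set_append)
        finally show ?thesis using low Y_def ka(3) by auto
      qed
      have lr: "length r = n - 1" using tD ld2 ka(3,4) c1 by (simp add: r_def t_def)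
      have dr: "distinct r"
      proof (rule card_distinct)
        show "card (set r) = length r" using sr lr lp dp by (simp add: distinct_card)
      qed
      have vr: "v \<notin> set r" using sr vp by simp
      have dx1: "distinct x1" using dr vr x1_def by simp
      have sx1: "set x1 = set x" using sr sxp x1_def by auto
      have sqx1: "squished c k' x1"
        unfolding sq_pos
      proof (intro allI impI)
        fix j assume j: "1 \<le> j \<and> j \<le> k' \<and> j \<le> length x1"
        show "\<exists>i<length x1. i \<le> c * (j - 1) \<and> x1 ! i = j"
        proof (cases "j < k'")
          case True
          have jl: "j - 1 < length [1..<k']" using True j by (simp only: length_upt) arith
          have "x1 ! (j - 1) = [1..<k'] ! (j - 1)" using jl unfolding x1_def r_def
            by (simp only: append_assoc nth_append_left)
          also have "\<dots> = j" using True j by simp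
          finally have "x1 ! (j - 1) = j" .
          moreover have "j - 1 < length x1" using j by arith
          moreover have "j - 1 \<le> c * (j - 1)" using c1 by simp
          ultimately show ?thesis by blast
        next
          case False
          then have jk: "j = k'" using j by simp
          have "x1 ! (k' - 1 + t) = k'" using tD by (simp add: x1_def r_def nth_append)
          moreover have "k' - 1 + t < length x1" using lr x1_def ka t_def n2 by simp
          moreover have "k' - 1 + t \<le> c * (k' - 1)"
          proof -
            have "k' - 1 + t = n - c - 1" using t_def ka(3,4) by simp
            also have "\<dots> \<le> c * (k' - 1)" using ka(2) ka(3) by (simp add: algebra_simps right_diff_distrib')
            finally show ?thesis .
          qed
          ultimately show ?thesis using jk by blast
        qed
      qed
      have sqr: "squished c k' r" using sq_butlast[OF sqx1[unfolded x1_def] vk] .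
      have zr: "0 \<notin> set r" using sr zp by simp
      have IHr: "eqv c r (sorted_list_of_set (set r))"
        using less.hyps[of r k'] lr n_def n2 dr zr ka sqr by simp
      have "eqv c p r" using IHp IHr sr eqv_sym by (metis rtranclp_trans)
      then have e1: "eqv c x x1"
        using eqv_lift[of c p r "[]" "[v]"] dx xp x1_def by simp
      define r' where "r' = [1..<k'] @ take t D @ [k'] @ butlast d2 @ [v]"
      define x2 where "x2 = r' @ [M]"
      define a where "a = [1..<k'] @ take t D"
      define u where "u = [k'] @ d2 @ [v]"
      define w where "w = [k'] @ butlast d2 @ [v] @ [M]"
      have d2M: "d2 = butlast d2 @ [M]" using lastD d2n by (metis append_butlast_last_id)
      have suw: "set u = set w" unfolding u_def w_def by (subst d2M) auto
      have x1a: "x1 = a @ u @ []" by (simp add: x1_def r_def a_def u_def)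
      have x2a: "x2 = a @ w @ []" by (simp add: x2_def r'_def a_def w_def)
      have lu: "length u = c + 1" using ld2 c1 by (simp add: u_def)
      have lw: "length w = c + 1" using ld2 c2 by (simp add: w_def)
      have d2Y: "set d2 \<subseteq> Y" using Dtd sD by (metis set_append Un_upper2)
      have d2g: "\<forall>z\<in>set d2. k' < z" using d2Y Ygt by blast
      have hu: "\<forall>z\<in>set u. hd u \<le> z" using d2g vk by (auto simp: u_def less_imp_le)
      have hdw: "hd w = hd u" by (simp add: u_def w_def)
      have hw: "\<forall>z\<in>set w. hd w \<le> z" using hu unfolding suw hdw .
      have sx2: "set x2 = set x1" using x1a x2a suw by simp
      have lx2: "length x2 = length x1" using x1a x2a lu lw by simp
      have dx2: "distinct x2"
      proof (rule card_distinct)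
        show "card (set x2) = length x2" using sx2 lx2 dx1 by (simp add: distinct_card)
      qed
      have m12: "mv c x1 x2" by (rule mvI[OF x1a x2a lu lw hu hw suw dx1 dx2])
      have z1: "0 \<notin> set x1" using sx1 z by simp
      have sqx2: "squished c k' x2" using sq_closed[OF m12 z1 sqx1] .
      have Mk: "k' < M" using vk vM by simp
      have sqr': "squished c k' r'" using sq_butlast[OF sqx2[unfolded x2_def] Mk] .
      have Mr': "M \<notin> set r'" using dx2 x2_def by simp
      have sr': "set x = insert M (set r')" using sx2 sx1 x2_def by simp
      have dr': "distinct r'" using dx2 x2_def by simp
      have lr': "length r' = n - 1" using lx2 x1_def lr x2_def by simp
      have zr': "0 \<notin> set r'" using sr' z by simp
      have IHr': "eqv c r' (sorted_list_of_set (set r'))"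
        using less.hyps[of r' k'] lr' n_def n2 dr' zr' ka sqr' by simp
      have e3: "eqv c x2 (sorted_list_of_set (set r') @ [M])"
        using eqv_lift[OF IHr', of "[]" "[M]"] dx2 x2_def by simp
      have "sorted_list_of_set (set x) = sorted_list_of_set (set r') @ [M]"
      proof -
        have "\<forall>a\<in>set r'. a < M" using Mge sr' Mr' by (metis insert_iff le_neq_implies_less)
        then show ?thesis using sls_snoc[of "set r'" M] sr' by simp
      qed
      then show ?thesis using e1 m12 e3 by (metis rtranclp.rtrancl_into_rtrancl rtranclp_trans)
    qed
  qed
qed


definition cls :: "('a \<Rightarrow> 'a \<Rightarrow> bool) \<Rightarrow> 'a \<Rightarrow> 'a set" where
  "cls R x = {y. R x y}"

definition eclosed :: "('a \<Rightarrow> 'a \<Rightarrow> bool) \<Rightarrow> 'a set \<Rightarrow> bool" where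
  "eclosed R S \<longleftrightarrow> (\<forall>x\<in>S. \<forall>y. R x y \<longrightarrow> y \<in> S)"

lemma card_cls_bij:
  assumes b: "bij_betw h S T" and e: "\<forall>x\<in>S. \<forall>y\<in>S. R1 x y \<longleftrightarrow> R2 (h x) (h y)"
    and c1: "eclosed R1 S" and c2: "eclosed R2 T"
  shows "card (cls R1 ` S) = card (cls R2 ` T)"
proof -
  have im: "cls R2 (h x) = h ` cls R1 x" if x: "x \<in> S" for x
  proof
    show "cls R2 (h x) \<subseteq> h ` cls R1 x"
    proof
      fix y assume "y \<in> cls R2 (h x)"
      then have r: "R2 (h x) y" by (simp add: cls_def)
      have "h x \<in> T" using b x by (auto simp: bij_betw_def)
      then have "y \<in> T" using c2 r by (auto simp: eclosed_def)
      then obtain x' where x': "x' \<in> S" "y = h x'" using b by (auto simp: bij_betw_def)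
      then have "R1 x x'" using e x r by auto
      then show "y \<in> h ` cls R1 x" using x' by (auto simp: cls_def)
    qed
  next
    show "h ` cls R1 x \<subseteq> cls R2 (h x)"
    proof
      fix y assume "y \<in> h ` cls R1 x"
      then obtain x' where x': "R1 x x'" "y = h x'" by (auto simp: cls_def)
      then have "x' \<in> S" using c1 x by (auto simp: eclosed_def)
      then show "y \<in> cls R2 (h x)" using e x x' by (auto simp: cls_def)
    qed
  qed
  have T: "T = h ` S" using b by (simp add: bij_betw_def)
  have "cls R2 ` T = image h ` (cls R1 ` S)"
    unfolding T image_image using im by (auto simp: image_iff)
  moreover have "inj_on (image h) (cls R1 ` S)"
  proof -
    have "cls R1 ` S \<subseteq> Pow S" using c1 by (auto simp: eclosed_def cls_def)
    moreover have "inj_on (image h) (Pow S)" using b by (simp add: bij_betw_def inj_on_image_Pow)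
    ultimately show ?thesis by (rule inj_on_subset[rotated])
  qed
  ultimately show ?thesis by (simp add: card_image)
qed

lemma card_cls_prod:
  assumes r1: "\<forall>x. R1 x x" and r2: "\<forall>x. R2 x x"
  shows "card (cls (\<lambda>(a, b) (a', b'). R1 a a' \<and> R2 b b') ` (P \<times> Q)) =
         card (cls R1 ` P) * card (cls R2 ` Q)"
proof -
  have e: "cls (\<lambda>(a, b) (a', b'). R1 a a' \<and> R2 b b') (a, b) = cls R1 a \<times> cls R2 b" for a b
    by (auto simp: cls_def)
  have "cls (\<lambda>(a, b) (a', b'). R1 a a' \<and> R2 b b') ` (P \<times> Q) =
        (\<lambda>(C, D). C \<times> D) ` (cls R1 ` P \<times> cls R2 ` Q)"
    by (force simp: e image_iff)
  moreover have "inj_on (\<lambda>(C, D). C \<times> D) (cls R1 ` P \<times> cls R2 ` Q)"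
  proof (rule inj_onI, clarify)
    fix a b a' b'
    assume "cls R1 a \<times> cls R2 b = cls R1 a' \<times> cls R2 b'"
    moreover have "cls R1 a \<noteq> {}" "cls R2 b \<noteq> {}" using r1 r2 by (auto simp: cls_def)
    ultimately show "cls R1 a = cls R1 a' \<and> cls R2 b = cls R2 b'" by (simp add: times_eq_iff)
  qed
  ultimately show ?thesis by (simp add: card_image card_cartesian_product)
qed

lemma card_cls_UN:
  assumes fI: "finite I" and fS: "\<forall>i\<in>I. finite (S i)" and cS: "\<forall>i\<in>I. eclosed R (S i)"
    and dS: "\<forall>i\<in>I. \<forall>j\<in>I. i \<noteq> j \<longrightarrow> S i \<inter> S j = {}" and r: "\<forall>x. R x x"
  shows "card (cls R ` (\<Union>i\<in>I. S i)) = (\<Sum>i\<in>I. card (cls R ` S i))"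
proof -
  have "cls R ` (\<Union>i\<in>I. S i) = (\<Union>i\<in>I. cls R ` S i)" by auto
  moreover have "card (\<Union>i\<in>I. cls R ` S i) = (\<Sum>i\<in>I. card (cls R ` S i))"
  proof (rule card_UN_disjoint[OF fI])
    show "\<forall>i\<in>I. finite (cls R ` S i)" using fS by simp
    show "\<forall>i\<in>I. \<forall>j\<in>I. i \<noteq> j \<longrightarrow> cls R ` S i \<inter> cls R ` S j = {}"
    proof (intro ballI impI)
      fix i j assume ij: "i \<in> I" "j \<in> I" "i \<noteq> j"
      show "cls R ` S i \<inter> cls R ` S j = {}"
      proof (rule ccontr)
        assume "cls R ` S i \<inter> cls R ` S j \<noteq> {}"
        then obtain x y where xy: "x \<in> S i" "y \<in> S j" "cls R x = cls R y" by auto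
        have "x \<in> cls R y" using xy(3) r by (auto simp: cls_def)
        then have "x \<in> S j" using cS ij xy(2) by (auto simp: eclosed_def cls_def)
        then show False using dS ij xy(1) by auto
      qed
    qed
  qed
  ultimately show ?thesis by simp
qed

lemma card_cls_diff:
  assumes fS: "finite S" and cS: "eclosed R S" and cT: "eclosed R T" and sub: "T \<subseteq> S"
    and r: "\<forall>x. R x x" and s: "\<forall>x y. R x y \<longrightarrow> R y x"
  shows "card (cls R ` S) = card (cls R ` T) + card (cls R ` (S - T))"
proof -
  have cST: "eclosed R (S - T)"
    using cS cT s unfolding eclosed_def by blast
  have "S = T \<union> (S - T)" using sub by auto
  then have "cls R ` S = cls R ` T \<union> cls R ` (S - T)" by (metis image_Un)
  moreover have "cls R ` T \<inter> cls R ` (S - T) = {}"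
  proof (rule ccontr)
    assume "cls R ` T \<inter> cls R ` (S - T) \<noteq> {}"
    then obtain x y where xy: "x \<in> T" "y \<in> S - T" "cls R x = cls R y" by auto
    have "y \<in> cls R x" using xy(3) r by (auto simp: cls_def)
    then have "y \<in> T" using cT xy(1) by (auto simp: eclosed_def cls_def)
    then show False using xy(2) by simp
  qed
  moreover have "finite T" using fS sub finite_subset by blast
  ultimately show ?thesis using fS by (simp add: card_Un_disjoint)
qed


definition SQ :: "nat \<Rightarrow> nat \<Rightarrow> nat \<Rightarrow> nat list set" where
  "SQ c k n = {x \<in> perms n. squished c k x}"

lemma eqv_perms: "x \<in> perms n \<Longrightarrow> eqv c x y \<Longrightarrow> y \<in> perms n"
  using eqv_set[of c x y] by (auto simp: perms_def)

lemma requiv_iff: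
  assumes x: "x \<in> perms n"
  shows "(x, y) \<in> requiv c n \<longleftrightarrow> eqv c x y"
proof
  assume "(x, y) \<in> requiv c n"
  then have "(\<lambda>x y. x \<in> perms n \<and> y \<in> perms n \<and> rstep c x y)\<^sup>*\<^sup>* x y"
    by (simp add: requiv_def)
  then show "eqv c x y"
  proof (induction rule: rtranclp_induct)
    case base then show ?case by simp
  next
    case (step y z)
    then have "mv c y z" by (auto simp: mv_def perms_def)
    then show ?case using step by (meson rtranclp.rtrancl_into_rtrancl)
  qed
next
  assume e: "eqv c x y"
  have "(\<lambda>x y. x \<in> perms n \<and> y \<in> perms n \<and> rstep c x y)\<^sup>*\<^sup>* x y"
    using e
  proof (induction rule: rtranclp_induct)
    case base then show ?case by simp
  next
    case (step y z)
    have yp: "y \<in> perms n" using eqv_perms[OF x step.hyps(1)] .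
    have zp: "z \<in> perms n" using eqv_perms[OF yp r_into_rtranclp[of "mv c", OF step.hyps(2)]] .
    have "rstep c y z" using step.hyps(2) by (simp add: mv_def)
    then show ?case using step.IH yp zp rtranclp.rtrancl_into_rtrancl[of _ x y z] by blast
  qed
  then show "(x, y) \<in> requiv c n" using x eqv_perms[OF x e] by (simp add: requiv_def)
qed

lemma quot_eq: "perms n // requiv c n = cls (eqv c) ` perms n"
proof -
  have "requiv c n `` {x} = cls (eqv c) x" if "x \<in> perms n" for x
    using requiv_iff[OF that] by (auto simp: cls_def)
  then show ?thesis unfolding quotient_def by auto
qed

lemma closed_SQ: "eclosed (eqv c) (SQ c k n)"
  unfolding eclosed_def SQ_def
proof (intro ballI allI impI)
  fix x y assume x: "x \<in> {x \<in> perms n. squished c k x}" and e: "eqv c x y"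
  have "0 \<notin> set x" using x by (auto simp: perms_def)
  then show "y \<in> {x \<in> perms n. squished c k x}"
    using x eqv_perms[OF _ e] eqv_sq_closed[OF e] by auto
qed

lemma gcount_eq: "gcount c k n = card (cls (eqv c) ` SQ c k n)"
proof -
  have "{C \<in> perms n // requiv c n. \<exists>phi\<in>C. squished c k phi} = cls (eqv c) ` SQ c k n"
  proof
    show "{C \<in> perms n // requiv c n. \<exists>phi\<in>C. squished c k phi} \<subseteq> cls (eqv c) ` SQ c k n"
    proof
      fix C assume "C \<in> {C \<in> perms n // requiv c n. \<exists>phi\<in>C. squished c k phi}"
      then obtain x phi where x: "x \<in> perms n" "C = cls (eqv c) x" "phi \<in> C" "squished c k phi"
        unfolding quot_eq by auto
      have e: "eqv c x phi" using x by (simp add: cls_def)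
      have "phi \<in> SQ c k n" using eqv_perms[OF x(1) e] x(4) by (simp add: SQ_def)
      moreover have "C = cls (eqv c) phi" using x(2) e eqv_sym
        by (auto simp: cls_def intro: rtranclp_trans)
      ultimately show "C \<in> cls (eqv c) ` SQ c k n" by blast
    qed
  next
    show "cls (eqv c) ` SQ c k n \<subseteq> {C \<in> perms n // requiv c n. \<exists>phi\<in>C. squished c k phi}"
      unfolding quot_eq SQ_def by (auto simp: cls_def)
  qed
  then show ?thesis unfolding gcount_def by simp
qed

lemma eqv_refl: "\<forall>x. eqv c x x" by simp
lemma eqv_symm: "\<forall>x y. eqv c x y \<longrightarrow> eqv c y x" using eqv_sym by blast

lemma finite_perms: "finite (perms n)"
proof -
  have "perms n = permutations_of_set {1..n}" by (auto simp: perms_def permutations_of_set_def)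
  then show ?thesis by simp
qed

lemma finite_SQ: "finite (SQ c k n)"
  using finite_perms by (simp add: SQ_def)


lemma eqv_short: "eqv c x y \<Longrightarrow> length x < c + 1 \<Longrightarrow> y = x"
proof (induction rule: rtranclp_induct)
  case base then show ?case by simp
next
  case (step y z)
  then have "y = x" by simp
  from step.hyps(2) obtain a u v b where "y = a @ u @ b" "length u = c + 1" by (rule mvE) blast
  then show ?case using step.prems \<open>y = x\<close> by simp
qed

lemma hd1_perms:
  assumes n: "1 \<le> n"
  shows "card {x \<in> perms n. hd x = 1} = fact (n - 1)"
proof -
  have "{x \<in> perms n. hd x = 1} = (Cons 1) ` permutations_of_set {2..n}"
  proof
    show "{x \<in> perms n. hd x = 1} \<subseteq> (Cons 1) ` permutations_of_set {2..n}"
    proof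
      fix x assume x: "x \<in> {x \<in> perms n. hd x = 1}"
      have dx: "distinct x" and sx: "set x = {1..n}" and hx: "hd x = 1"
        using x by (simp_all add: perms_def)
      have xn: "x \<noteq> []" using sx n by auto
      have xe: "x = 1 # tl x" using xn hx by (metis list.collapse)
      have "distinct (tl x)" using dx by (simp add: distinct_tl)
      moreover have "set (tl x) = {2..n}"
      proof -
        have "set x = insert 1 (set (tl x))" using xe by (metis list.simps(15))
        moreover have "1 \<notin> set (tl x)" using xe dx by (metis distinct.simps(2))
        ultimately have "set (tl x) = set x - {1}" by auto
        moreover have "{1..n} - {1} = {2..(n::nat)}" by auto
        ultimately show ?thesis using sx by simp
      qed
      ultimately have "tl x \<in> permutations_of_set {2..n}"
        by (simp add: permutations_of_set_def)
      then show "x \<in> (Cons 1) ` permutations_of_set {2..n}" using xe by blast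
    qed
  next
    show "(Cons 1) ` permutations_of_set {2..n} \<subseteq> {x \<in> perms n. hd x = 1}"
      using n by (auto simp: permutations_of_set_def perms_def)
  qed
  then have "card {x \<in> perms n. hd x = 1} = card (permutations_of_set {2..n})"
    by (simp add: card_image)
  then show ?thesis by simp
qed

lemma caseA:
  assumes n: "1 \<le> n" and nc: "n < c + 1" and k: "1 \<le> k"
  shows "gcount c k n = fact (n - 1)"
proof -
  have cl: "cls (eqv c) x = {x}" if "x \<in> perms n" for x
    using eqv_short[of c x] that nc by (auto simp: cls_def perms_def distinct_card[symmetric])
  have "cls (eqv c) ` SQ c k n = (\<lambda>x. {x}) ` SQ c k n"
    using cl by (auto simp: SQ_def image_iff)
  then have "gcount c k n = card (SQ c k n)" unfolding gcount_eq by (simp add: card_image)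
  moreover have "SQ c k n = {x \<in> perms n. hd x = 1}"
  proof -
    have "squished c k x \<longleftrightarrow> hd x = 1" if x: "x \<in> perms n" for x
    proof
      have lx: "length x = n" using x by (auto simp: perms_def distinct_card[symmetric])
      then have xn: "x \<noteq> []" using n by auto
      {
        assume "squished c k x"
        then obtain i where "i < length x" "i \<le> c * (1 - 1)" "x ! i = 1"
          using k n lx unfolding sq_pos by fastforce
        then show "hd x = 1" using xn by (simp add: hd_conv_nth)
      }
      {
        assume h: "hd x = 1"
        show "squished c k x" unfolding sq_pos
        proof (intro allI impI)
          fix j assume j: "1 \<le> j \<and> j \<le> k \<and> j \<le> length x"
          show "\<exists>i<length x. i \<le> c * (j - 1) \<and> x ! i = j"
          proof (cases "j = 1")
            case True then show ?thesis using h xn by (auto simp: hd_conv_nth)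
          next
            case False
            have "j \<in> set x" using x j lx by (auto simp: perms_def)
            then obtain i where i: "i < length x" "x ! i = j" by (metis in_set_conv_nth)
            have "1 \<le> j - 1" using False j by arith
            then have "c * 1 \<le> c * (j - 1)" by (intro mult_le_mono2)
            then have cc: "c \<le> c * (j - 1)" by simp
            have "i \<le> c * (j - 1)" using i lx nc cc by linarith
            then show ?thesis using i by blast
          qed
        qed
      }
    qed
    then show ?thesis by (auto simp: SQ_def)
  qed
  ultimately show ?thesis using hd1_perms[OF n] by simp
qed

lemma id_perms: "[1..<n+1] \<in> perms n"
  by (auto simp: perms_def)

lemma sq_id: "1 \<le> c \<Longrightarrow> squished c k [1..<n+1]"
  unfolding sq_pos
proof (intro allI impI)
  fix j assume c: "1 \<le> c" and j: "1 \<le> j \<and> j \<le> k \<and> j \<le> length [1..<n+1]"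
  have lj: "j \<le> n" using j by (simp only: length_upt) simp
  have "[1..<n+1] ! (j - 1) = j" using j lj by (subst nth_upt) auto
  moreover have "j - 1 < length [1..<n+1]" using lj j by (simp only: length_upt) arith
  moreover have "j - 1 \<le> c * (j - 1)" using c by simp
  ultimately show "\<exists>i<length [1..<n+1]. i \<le> c * (j - 1) \<and> [1..<n+1] ! i = j" by blast
qed

lemma caseB:
  assumes c: "1 \<le> c" and n1: "c + 1 \<le> n" and n2: "n \<le> c * k + 1" and k: "1 \<le> k"
  shows "gcount c k n = 1"
proof -
  define I where "I = [1..<n+1]"
  have "cls (eqv c) x = cls (eqv c) I" if x: "x \<in> SQ c k n" for x
  proof -
    have xp: "distinct x" "set x = {1..n}" using x by (auto simp: SQ_def perms_def)
    have lx: "length x = n" using xp by (simp add: distinct_card[symmetric])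
    have "sorted_list_of_set (set x) = I" using xp
      by (simp add: I_def atLeastLessThanSuc_atLeastAtMost[symmetric])
    moreover have "eqv c x (sorted_list_of_set (set x))"
      by (rule G) (use xp lx n1 n2 k x in \<open>auto simp: SQ_def\<close>)
    ultimately have "eqv c x I" by simp
    then show ?thesis using eqv_sym by (auto simp: cls_def intro: rtranclp_trans)
  qed
  moreover have "I \<in> SQ c k n" using id_perms sq_id[OF c] by (simp add: SQ_def I_def)
  ultimately have "cls (eqv c) ` SQ c k n = {cls (eqv c) I}" by blast
  then show ?thesis unfolding gcount_eq by simp
qed


lemma mv_map:
  assumes sm: "strict_mono_on D f" and xD: "set x \<subseteq> D" and m: "mv c x y"
  shows "mv c (map f x) (map f y)"
proof -
  from m obtain a u v b where x: "x = a @ u @ b" and y: "y = a @ v @ b" and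
    lu: "length u = c + 1" and lv: "length v = c + 1" and
    hu: "\<forall>z\<in>set u. hd u \<le> z" and hv: "\<forall>z\<in>set v. hd v \<le> z" and suv: "set u = set v"
    and huv: "hd u = hd v" and dx: "distinct x" and dy: "distinct y" and sxy: "set x = set y"
    by (rule mvE)
  have inj: "inj_on f D" using sm by (rule strict_mono_on_imp_inj_on)
  have uD: "set u \<subseteq> D" and vD: "set v \<subseteq> D" using xD x suv by auto
  have un: "u \<noteq> []" and vn: "v \<noteq> []" using lu lv by auto
  have hmu: "\<forall>z\<in>set (map f u). hd (map f u) \<le> z"
  proof
    fix z assume "z \<in> set (map f u)"
    then obtain z' where z': "z' \<in> set u" "z = f z'" by auto
    have "hd u \<in> D" using uD un by (simp add: subsetD)
    then have "f (hd u) \<le> f z'" using strict_mono_on_leD[OF sm] hu z' uD by blast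
    then show "hd (map f u) \<le> z" using z' un by (simp add: hd_map)
  qed
  have hmv: "\<forall>z\<in>set (map f v). hd (map f v) \<le> z"
  proof
    fix z assume "z \<in> set (map f v)"
    then obtain z' where z': "z' \<in> set v" "z = f z'" by auto
    have "hd v \<in> D" using vD vn by (simp add: subsetD)
    then have "f (hd v) \<le> f z'" using strict_mono_on_leD[OF sm] hv z' vD by blast
    then show "hd (map f v) \<le> z" using z' vn by (simp add: hd_map)
  qed
  have yD: "set y \<subseteq> D" using xD sxy by simp
  have d1: "distinct (map f x)" using dx inj xD by (simp add: distinct_map inj_on_subset)
  have d2: "distinct (map f y)" using dy inj yD by (simp add: distinct_map inj_on_subset)
  show ?thesis
    by (rule mvI[where a="map f a" and u="map f u" and v="map f v" and b="map f b"])
       (use x y lu lv hmu hmv suv d1 d2 in simp_all)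
qed

lemma eqv_map:
  assumes sm: "strict_mono_on D f" and e: "eqv c x y" and xD: "set x \<subseteq> D"
  shows "eqv c (map f x) (map f y)"
  using e
proof (induction rule: rtranclp_induct)
  case base then show ?case by simp
next
  case (step y z)
  have "set y \<subseteq> D" using eqv_set[OF step.hyps(1)] xD by simp
  then have "mv c (map f y) (map f z)" using mv_map[OF sm _ step.hyps(2)] by simp
  then show ?case using step.IH by (meson rtranclp.rtrancl_into_rtrancl)
qed

lemma strict_mono_inv:
  fixes f :: "nat \<Rightarrow> nat"
  assumes sm: "strict_mono_on D f"
  shows "strict_mono_on (f ` D) (inv_into D f)"
proof (rule strict_mono_onI)
  fix r s assume rs: "r \<in> f ` D" "s \<in> f ` D" "r < s"
  then obtain x y where xy: "x \<in> D" "y \<in> D" "r = f x" "s = f y" by auto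
  have inj: "inj_on f D" using sm by (rule strict_mono_on_imp_inj_on)
  have "x < y"
  proof (rule ccontr)
    assume "\<not> x < y"
    then have "y \<le> x" by simp
    then have "f y \<le> f x" using strict_mono_on_leD[OF sm xy(2) xy(1)] by simp
    then show False using rs xy by simp
  qed
  then show "inv_into D f r < inv_into D f s" using xy inj by (simp add: inv_into_f_f)
qed

lemma card_relabel:
  fixes f :: "nat \<Rightarrow> nat"
  assumes sm: "strict_mono_on D f" and SD: "\<forall>x\<in>S. set x \<subseteq> D"
    and cS: "eclosed (eqv c) S" and cT: "eclosed (eqv c) (map f ` S)"
  shows "card (cls (eqv c) ` S) = card (cls (eqv c) ` (map f ` S))"
proof (rule card_cls_bij[OF _ _ cS cT])
  have inj: "inj_on f D" using sm by (rule strict_mono_on_imp_inj_on)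
  show "bij_betw (map f) S (map f ` S)"
  proof (rule inj_on_imp_bij_betw, rule inj_onI)
    fix x y assume "x \<in> S" "y \<in> S" "map f x = map f y"
    then show "x = y" using SD inj map_inj_on[of f x y] inj_on_subset[OF inj] by (metis Un_least)
  qed
  show "\<forall>x\<in>S. \<forall>y\<in>S. eqv c x y \<longleftrightarrow> eqv c (map f x) (map f y)"
  proof (intro ballI iffI)
    fix x y assume "x \<in> S" "y \<in> S" "eqv c x y"
    then show "eqv c (map f x) (map f y)" using eqv_map[OF sm] SD by blast
  next
    fix x y assume xy: "x \<in> S" "y \<in> S" and e: "eqv c (map f x) (map f y)"
    define g where "g = inv_into D f"
    have smg: "strict_mono_on (f ` D) g" unfolding g_def by (rule strict_mono_inv[OF sm])
    have "set (map f x) \<subseteq> f ` D" using SD xy by auto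
    then have "eqv c (map g (map f x)) (map g (map f y))" using eqv_map[OF smg e] by simp
    moreover have "map g (map f z) = z" if "set z \<subseteq> D" for z
      using that inj by (induction z) (auto simp: g_def inv_into_f_f)
    ultimately show "eqv c x y" using SD xy by simp
  qed
qed


definition oi :: "nat set \<Rightarrow> nat \<Rightarrow> nat" where
  "oi A i = sorted_list_of_set A ! (i - 1)"

lemma oi_mono: "finite A \<Longrightarrow> strict_mono_on {1..card A} (oi A)"
proof (rule strict_mono_onI)
  fix r s assume A: "finite A" and rs: "r \<in> {1..card A}" "s \<in> {1..card A}" "r < s"
  have "sorted_wrt (<) (sorted_list_of_set A)" by (simp add: strict_sorted_list_of_set)
  moreover have "r - 1 < s - 1" "s - 1 < length (sorted_list_of_set A)" using rs A by auto
  ultimately show "oi A r < oi A s" unfolding oi_def by (rule sorted_wrt_nth_less)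
qed

lemma oi_image: "finite A \<Longrightarrow> oi A ` {1..card A} = A"
proof
  assume A: "finite A"
  show "oi A ` {1..card A} \<subseteq> A"
  proof
    fix a assume "a \<in> oi A ` {1..card A}"
    then obtain i where i: "i \<in> {1..card A}" "a = oi A i" by auto
    then have "i - 1 < length (sorted_list_of_set A)" using A by auto
    then show "a \<in> A" using i A unfolding oi_def by (metis nth_mem set_sorted_list_of_set)
  qed
  show "A \<subseteq> oi A ` {1..card A}"
  proof
    fix a assume "a \<in> A"
    then have "a \<in> set (sorted_list_of_set A)" using A by simp
    then obtain t where t: "t < length (sorted_list_of_set A)" "sorted_list_of_set A ! t = a"
      by (metis in_set_conv_nth)
    then have "t + 1 \<in> {1..card A}" "oi A (t + 1) = a" using A by (auto simp: oi_def)
    then show "a \<in> oi A ` {1..card A}" by (metis imageI)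
  qed
qed

lemma sls_split:
  assumes A: "finite A" and z: "0 \<notin> A" and low: "{1..k} \<subseteq> A"
  shows "sorted_list_of_set A = [1..<k+1] @ sorted_list_of_set (A - {1..k})"
proof -
  have gt: "\<forall>y\<in>A - {1..k}. k < y" using z by (auto simp: not_le)
  have cross: "\<forall>x\<in>set [1..<k+1]. \<forall>y\<in>set (sorted_list_of_set (A - {1..k})). x < y"
  proof (intro ballI)
    fix x y assume x: "x \<in> set [1..<k+1]" and y: "y \<in> set (sorted_list_of_set (A - {1..k}))"
    have "x \<le> k" using x by (simp del: upt_Suc)
    moreover have "k < y" using y gt A by simp
    ultimately show "x < y" by simp
  qed
  have "sorted_wrt (<) ([1..<k+1] @ sorted_list_of_set (A - {1..k}))"
    unfolding sorted_wrt_append using cross A by (simp add: strict_sorted_list_of_set del: upt_Suc)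
  moreover have "set ([1..<k+1] @ sorted_list_of_set (A - {1..k})) = A"
    using A low by auto
  ultimately show ?thesis using sls_id by metis
qed

lemma oi_low:
  assumes A: "finite A" and z: "0 \<notin> A" and low: "{1..k} \<subseteq> A" and i: "1 \<le> i" "i \<le> k"
  shows "oi A i = i"
proof -
  have "oi A i = ([1..<k+1] @ sorted_list_of_set (A - {1..k})) ! (i - 1)"
    unfolding oi_def using sls_split[OF A z low] by simp
  also have "\<dots> = [1..<k+1] ! (i - 1)"
  proof -
    have "i - 1 < length [1..<k+1]" using i by (simp only: length_upt)
    then show ?thesis by (rule nth_append_left)
  qed
  also have "\<dots> = i" using i by (subst nth_upt) auto
  finally show ?thesis .
qed

lemma oi_first:
  assumes "finite A" "A \<noteq> {}"
  shows "oi A 1 = Min A"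
  using sorted_list_of_set_nonempty[OF assms] by (simp add: oi_def)

lemma sq_map:
  assumes xD: "set x \<subseteq> D" and inj: "inj_on f D"
    and fj: "\<forall>i\<in>D. \<forall>j. 1 \<le> j \<and> j \<le> k \<longrightarrow> (f i = j \<longleftrightarrow> i = j)"
  shows "squished c k (map f x) \<longleftrightarrow> squished c k x"
proof -
  have "(map f x) ! i = j \<longleftrightarrow> x ! i = j" if "i < length x" "1 \<le> j" "j \<le> k" for i j
  proof -
    have "x ! i \<in> D" using that xD by (meson nth_mem subsetD)
    then show ?thesis using fj that by simp
  qed
  then have key: "\<And>i j. i < length x \<Longrightarrow> 1 \<le> j \<Longrightarrow> j \<le> k \<Longrightarrow> (map f x) ! i = j \<longleftrightarrow> x ! i = j"
    by blast
  show ?thesis unfolding sq_pos length_map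
  proof (intro iffI allI impI)
    fix j assume h: "\<forall>j. 1 \<le> j \<and> j \<le> k \<and> j \<le> length x \<longrightarrow> (\<exists>i<length x. i \<le> c * (j - 1) \<and> map f x ! i = j)"
      and j: "1 \<le> j \<and> j \<le> k \<and> j \<le> length x"
    then obtain i where "i<length x" "i \<le> c * (j - 1)" "map f x ! i = j" by blast
    then show "\<exists>i<length x. i \<le> c * (j - 1) \<and> x ! i = j" using key j by blast
  next
    fix j assume h: "\<forall>j. 1 \<le> j \<and> j \<le> k \<and> j \<le> length x \<longrightarrow> (\<exists>i<length x. i \<le> c * (j - 1) \<and> x ! i = j)"
      and j: "1 \<le> j \<and> j \<le> k \<and> j \<le> length x"
    then obtain i where "i<length x" "i \<le> c * (j - 1)" "x ! i = j" by blast
    then show "\<exists>i<length x. i \<le> c * (j - 1) \<and> map f x ! i = j" using key j by blast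
  qed
qed

definition Pset :: "nat \<Rightarrow> nat \<Rightarrow> nat set \<Rightarrow> nat list set" where
  "Pset c k A = {p. distinct p \<and> set p = A \<and> squished c k p}"

definition Qset :: "nat \<Rightarrow> nat set \<Rightarrow> nat list set" where
  "Qset k B = {q. distinct q \<and> set q = insert (k + 1) B \<and> hd q = k + 1}"

lemma closed_Pset: "0 \<notin> A \<Longrightarrow> eclosed (eqv c) (Pset c k A)"
  unfolding eclosed_def Pset_def using eqv_set eqv_sq_closed by blast

lemma closed_Qset: "eclosed (eqv c) (Qset k B)"
  unfolding eclosed_def Qset_def
proof (intro ballI allI impI)
  fix x y assume x: "x \<in> {q. distinct q \<and> set q = insert (k + 1) B \<and> hd q = k + 1}" and e: "eqv c x y"
  have "set y = set x \<and> length y = length x \<and> (distinct x \<longrightarrow> distinct y)" by (rule eqv_set[OF e])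
  moreover have "hd y = hd x" by (rule eqv_hd[OF e])
  ultimately show "y \<in> {q. distinct q \<and> set q = insert (k + 1) B \<and> hd q = k + 1}" using x by simp
qed

lemma count_P:
  assumes A: "finite A" and z: "0 \<notin> A" and low: "{1..k} \<subseteq> A" and kA: "k \<le> card A"
  shows "card (cls (eqv c) ` Pset c k A) = gcount c k (card A)"
proof -
  define m where "m = card A"
  define D where "D = {1..m}"
  define f where "f = oi A"
  have sm: "strict_mono_on D f" using oi_mono[OF A] by (simp add: D_def f_def m_def)
  have inj: "inj_on f D" using sm by (rule strict_mono_on_imp_inj_on)
  have fD: "f ` D = A" using oi_image[OF A] by (simp add: D_def f_def m_def)
  have fj: "\<forall>i\<in>D. \<forall>j. 1 \<le> j \<and> j \<le> k \<longrightarrow> (f i = j \<longleftrightarrow> i = j)"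
  proof (intro ballI allI impI)
    fix i j assume i: "i \<in> D" and j: "1 \<le> j \<and> j \<le> k"
    have jD: "j \<in> D" using j kA by (simp add: D_def m_def)
    have fjj: "f j = j" using oi_low[OF A z low] j by (simp add: f_def)
    show "f i = j \<longleftrightarrow> i = j" using inj i jD fjj by (metis inj_on_eq_iff)
  qed
  have SD: "\<forall>x\<in>SQ c k m. set x \<subseteq> D" by (auto simp: SQ_def perms_def D_def)
  have img: "map f ` SQ c k m = Pset c k A"
  proof
    show "map f ` SQ c k m \<subseteq> Pset c k A"
    proof
      fix y assume "y \<in> map f ` SQ c k m"
      then obtain x where x: "x \<in> SQ c k m" "y = map f x" by auto
      have xd: "distinct x" "set x = D" "squished c k x" using x by (auto simp: SQ_def perms_def D_def)
      have "distinct y" using xd inj x by (simp add: distinct_map)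
      moreover have "set y = A" using xd fD x by simp
      moreover have "squished c k y" using sq_map[of x D f k c] xd inj fj x by simp
      ultimately show "y \<in> Pset c k A" by (simp add: Pset_def)
    qed
  next
    show "Pset c k A \<subseteq> map f ` SQ c k m"
    proof
      fix p assume p: "p \<in> Pset c k A"
      have pd: "distinct p" "set p = A" "squished c k p" using p by (auto simp: Pset_def)
      define g where "g = inv_into D f"
      define x where "x = map g p"
      have fx: "map f x = p"
      proof -
        have "\<forall>a\<in>set p. f (g a) = a" using pd fD by (auto simp: g_def f_inv_into_f)
        then show ?thesis by (simp add: x_def map_idI)
      qed
      have sx: "set x = D"
      proof -
        have "set x = g ` set p" by (simp add: x_def)
        also have "\<dots> = g ` f ` D" using pd fD by simp
        also have "\<dots> = D" using inj by (simp add: g_def)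
        finally show ?thesis .
      qed
      have dx: "distinct x" using fx pd by (metis distinct_map)
      have "squished c k x" using sq_map[of x D f k c] sx inj fj fx pd by simp
      then have "x \<in> SQ c k m" using sx dx by (simp add: SQ_def perms_def D_def)
      then show "p \<in> map f ` SQ c k m" using fx by blast
    qed
  qed
  have "gcount c k m = card (cls (eqv c) ` (map f ` SQ c k m))"
    unfolding gcount_eq
    by (rule card_relabel[OF sm SD closed_SQ]) (simp add: img closed_Pset[OF z])
  then show ?thesis using img m_def by simp
qed

lemma sq1_iff: "squished c 1 x \<longleftrightarrow> (x = [] \<or> hd x = 1)"
proof
  assume s: "squished c 1 x"
  show "x = [] \<or> hd x = 1"
  proof (cases x)
    case Nil then show ?thesis by simp
  next
    case (Cons a l)
    then obtain i where "i < length x" "i \<le> c * (1 - 1)" "x ! i = 1"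
      using s unfolding sq_pos by (metis le_refl length_Cons le_add1 plus_1_eq_Suc)
    then show ?thesis using Cons by simp
  qed
next
  assume h: "x = [] \<or> hd x = 1"
  show "squished c 1 x" unfolding sq_pos
  proof (intro allI impI)
    fix j assume j: "1 \<le> j \<and> j \<le> 1 \<and> j \<le> length x"
    then have j1: "j = 1" and xn: "x \<noteq> []" by auto
    then have "x ! 0 = 1" using h by (simp add: hd_conv_nth)
    then show "\<exists>i<length x. i \<le> c * (j - 1) \<and> x ! i = j" using j1 xn by auto
  qed
qed

lemma count_Q:
  assumes B: "finite B" and gt: "\<forall>b\<in>B. k + 1 < b"
  shows "card (cls (eqv c) ` Qset k B) = gcount c 1 (card B + 1)"
proof -
  define B' where "B' = insert (k + 1) B"
  define m where "m = card B + 1"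
  have fB': "finite B'" using B by (simp add: B'_def)
  have cB': "card B' = m" using B gt by (auto simp: B'_def m_def)
  define D where "D = {1..m}"
  define f where "f = oi B'"
  have sm: "strict_mono_on D f" using oi_mono[OF fB'] cB' by (simp add: D_def f_def)
  have inj: "inj_on f D" using sm by (rule strict_mono_on_imp_inj_on)
  have fD: "f ` D = B'" using oi_image[OF fB'] cB' by (simp add: D_def f_def)
  have f1: "f 1 = k + 1"
  proof -
    have "Min B' = k + 1" using B gt unfolding B'_def
      by (intro Min_eqI) (auto intro: less_imp_le)
    then show ?thesis using oi_first[OF fB'] by (simp add: f_def B'_def)
  qed
  have 1: "1 \<in> D" by (simp add: D_def m_def)
  have hdf: "hd (map f x) = k + 1 \<longleftrightarrow> hd x = 1" if "set x = D" for x
  proof -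
    have xn: "x \<noteq> []" using that 1 by auto
    have "hd x \<in> D" using that xn by (metis hd_in_set)
    then show ?thesis using xn inj 1 f1 by (metis hd_map inj_on_eq_iff)
  qed
  have SD: "\<forall>x\<in>SQ c 1 m. set x \<subseteq> D" by (auto simp: SQ_def perms_def D_def)
  have img: "map f ` SQ c 1 m = Qset k B"
  proof
    show "map f ` SQ c 1 m \<subseteq> Qset k B"
    proof
      fix y assume "y \<in> map f ` SQ c 1 m"
      then obtain x where x: "x \<in> SQ c 1 m" "y = map f x" by auto
      have xd: "distinct x" "set x = D" "squished c 1 x" using x by (auto simp: SQ_def perms_def D_def)
      have xn: "x \<noteq> []" using xd 1 by auto
      have "distinct y" using xd inj x by (simp add: distinct_map)
      moreover have "set y = insert (k + 1) B" using xd fD x B'_def by simp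
      moreover have "hd y = k + 1" using hdf[OF xd(2)] xd(3) xn x sq1_iff by auto
      ultimately show "y \<in> Qset k B" by (simp add: Qset_def)
    qed
  next
    show "Qset k B \<subseteq> map f ` SQ c 1 m"
    proof
      fix p assume p: "p \<in> Qset k B"
      have pd: "distinct p" "set p = B'" "hd p = k + 1" using p by (auto simp: Qset_def B'_def)
      define g where "g = inv_into D f"
      define x where "x = map g p"
      have fx: "map f x = p"
      proof -
        have "\<forall>a\<in>set p. f (g a) = a" using pd fD by (auto simp: g_def f_inv_into_f)
        then show ?thesis by (simp add: x_def map_idI)
      qed
      have sx: "set x = D"
      proof -
        have "set x = g ` set p" by (simp add: x_def)
        also have "\<dots> = g ` f ` D" using pd fD by simp
        also have "\<dots> = D" using inj by (simp add: g_def)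
        finally show ?thesis .
      qed
      have dx: "distinct x" using fx pd by (metis distinct_map)
      have "hd x = 1" using hdf[OF sx] fx pd by simp
      then have "squished c 1 x" using sq1_iff by simp
      then have "x \<in> SQ c 1 m" using sx dx by (simp add: SQ_def perms_def D_def)
      then show "p \<in> map f ` SQ c 1 m" using fx by blast
    qed
  qed
  have "gcount c 1 m = card (cls (eqv c) ` (map f ` SQ c 1 m))"
    unfolding gcount_eq
    by (rule card_relabel[OF sm SD closed_SQ]) (simp only: img closed_Qset)
  then show ?thesis using img m_def by simp
qed


lemma split_cond:
  assumes s: "squished c k p" and dp: "distinct p" and z: "0 \<notin> set p" and nk: "k + 1 \<notin> set p"
    and lp: "c * k + 1 \<le> length p" and c1: "1 \<le> c"
  shows "\<forall>i. length p - c \<le> i \<longrightarrow> i < length p \<longrightarrow> k + 1 < p ! i"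
proof (intro allI impI)
  fix i assume i1: "length p - c \<le> i" and i2: "i < length p"
  define m where "m = p ! i"
  have mp: "m \<in> set p" using i2 by (simp add: m_def)
  show "k + 1 < p ! i"
  proof (rule ccontr)
    assume "\<not> k + 1 < p ! i"
    then have mk: "m \<le> k" using mp nk by (auto simp: m_def) (metis le_neq_implies_less less_Suc_eq_le not_less)
    have m1: "1 \<le> m" using mp z by (metis less_one not_le)
    have "k \<le> c * k" using c1 by simp
    then have ml: "m \<le> length p" using mk lp by linarith
    have "i \<le> c * (m - 1)" using sq_idx[OF s dp m1 mk ml i2] m_def by simp
    also have "\<dots> \<le> c * (k - 1)" using mk by (intro mult_le_mono2) simp
    finally have "i \<le> c * (k - 1)" .
    moreover have "c * (k - 1) + c = c * k" using mk m1 by (cases k) (auto simp: algebra_simps)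
    ultimately show False using i1 lp by linarith
  qed
qed

definition Rp :: "nat \<Rightarrow> nat list \<times> nat list \<Rightarrow> nat list \<times> nat list \<Rightarrow> bool" where
  "Rp c = (\<lambda>(a, b) (a', b'). eqv c a a' \<and> eqv c b b')"

definition Wg :: "nat \<Rightarrow> nat \<Rightarrow> nat set \<Rightarrow> nat set \<Rightarrow> nat list set" where
  "Wg c k A B = (\<lambda>(p, q). p @ q) ` (Pset c k A \<times> Qset k B)"

locale dec =
  fixes c k :: nat and A B :: "nat set"
  assumes c1: "1 \<le> c" and z: "0 \<notin> A" and nk: "k + 1 \<notin> A" and cA: "c * k + 1 \<le> card A"
    and fA: "finite A" and disj: "A \<inter> B = {}"
begin

lemma reach:
  assumes e: "eqv c (p @ q) z" and p: "p \<in> Pset c k A" and q: "q \<in> Qset k B"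
  shows "\<exists>p' q'. z = p' @ q' \<and> p' \<in> Pset c k A \<and> q' \<in> Qset k B \<and> eqv c p p' \<and> eqv c q q'"
  using e
proof (induction rule: rtranclp_induct)
  case base then show ?case using p q by blast
next
  case (step y z)
  then obtain p' q' where pq: "y = p' @ q'" "p' \<in> Pset c k A" "q' \<in> Qset k B" "eqv c p p'" "eqv c q q'"
    by blast
  have pd: "distinct p'" "set p' = A" "squished c k p'" using pq by (auto simp: Pset_def)
  have qd: "distinct q'" "set q' = insert (k+1) B" "hd q' = k + 1" using pq by (auto simp: Qset_def)
  have qn: "q' \<noteq> []" using qd by auto
  have lp: "length p' = card A" using pd by (metis distinct_card)
  have h: "\<forall>i. length p' - c \<le> i \<longrightarrow> i < length p' \<longrightarrow> hd q' < p' ! i"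
    using split_cond[OF pd(3) pd(1)] pd z nk lp cA c1 qd by simp
  have m: "mv c (p' @ q') z" using step.hyps(2) pq by simp
  obtain p'' q'' where pq2: "z = p'' @ q''" "length p'' = length p'"
    "(mv c p' p'' \<and> q'' = q') \<or> (p'' = p' \<and> mv c q' q'')"
    using mv_split[OF m qn h] by blast
  show ?case
  proof (cases "mv c p' p'' \<and> q'' = q'")
    case True
    have e2: "eqv c p p''" using pq(4) True by (meson rtranclp.rtrancl_into_rtrancl)
    have "p'' \<in> Pset c k A" using closed_Pset[OF z] pq(2) True unfolding eclosed_def by blast
    then show ?thesis using pq2 True e2 pq by blast
  next
    case False
    then have F: "p'' = p'" "mv c q' q''" using pq2 by auto
    have e2: "eqv c q q''" using pq(5) F by (meson rtranclp.rtrancl_into_rtrancl)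
    have "q'' \<in> Qset k B" using closed_Qset pq(3) F unfolding eclosed_def by blast
    then show ?thesis using pq2 F e2 pq by blast
  qed
qed

abbreviation W where "W \<equiv> Wg c k A B"

lemma lenP: "p \<in> Pset c k A \<Longrightarrow> length p = card A"
  by (auto simp: Pset_def distinct_card)

lemma W_closed: "eclosed (eqv c) W"
  unfolding eclosed_def Wg_def using reach by fast

lemma W_card: "card (cls (eqv c) ` W) = card (cls (eqv c) ` Pset c k A) * card (cls (eqv c) ` Qset k B)"
proof -
  have "card (cls (Rp c) ` (Pset c k A \<times> Qset k B)) = card (cls (eqv c) ` W)"
  proof (rule card_cls_bij)
    show "bij_betw (\<lambda>(p, q). p @ q) (Pset c k A \<times> Qset k B) W"
      unfolding Wg_def
    proof (rule inj_on_imp_bij_betw, rule inj_onI, clarify)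
      fix p q p' q' assume "p \<in> Pset c k A" "q \<in> Qset k B" "p' \<in> Pset c k A" "q' \<in> Qset k B"
        and e: "p @ q = p' @ q'"
      then have "length p = length p'" using lenP by simp
      then show "p = p' \<and> q = q'" using e by simp
    qed
    show "\<forall>x\<in>Pset c k A \<times> Qset k B. \<forall>y\<in>Pset c k A \<times> Qset k B.
            Rp c x y \<longleftrightarrow> eqv c ((\<lambda>(p, q). p @ q) x) ((\<lambda>(p, q). p @ q) y)"
    proof (clarify)
      fix p q p' q' assume pq: "p \<in> Pset c k A" "q \<in> Qset k B" "p' \<in> Pset c k A" "q' \<in> Qset k B"
      show "Rp c (p, q) (p', q') \<longleftrightarrow> eqv c (p @ q) (p' @ q')"
      proof
        assume "Rp c (p, q) (p', q')"
        then have e: "eqv c p p'" "eqv c q q'" by (auto simp: Rp_def)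
        have d1: "distinct (p @ q)"
          using pq disj nk by (auto simp: Pset_def Qset_def)
        have d2: "distinct (p' @ q)"
          using pq disj nk by (auto simp: Pset_def Qset_def)
        have "eqv c (p @ q) (p' @ q)" using eqv_lift[OF e(1), of "[]" q] d1 by simp
        moreover have "eqv c (p' @ q) (p' @ q')" using eqv_lift[OF e(2), of p' "[]"] d2 by simp
        ultimately show "eqv c (p @ q) (p' @ q')" by (rule rtranclp_trans)
      next
        assume "eqv c (p @ q) (p' @ q')"
        then obtain p'' q'' where r: "p' @ q' = p'' @ q''" "p'' \<in> Pset c k A" "eqv c p p''" "eqv c q q''"
          using reach[OF _ pq(1,2)] by blast
        have "length p'' = length p'" using r(2) pq(3) lenP by simp
        then have "p'' = p'" "q'' = q'" using r(1) by auto
        then show "Rp c (p, q) (p', q')" using r by (simp add: Rp_def)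
      qed
    qed
    show "eclosed (Rp c) (Pset c k A \<times> Qset k B)"
      unfolding eclosed_def Rp_def
      using closed_Pset[OF z] closed_Qset unfolding eclosed_def by auto
    show "eclosed (eqv c) W" by (rule W_closed)
  qed
  moreover have "card (cls (Rp c) ` (Pset c k A \<times> Qset k B)) =
      card (cls (eqv c) ` Pset c k A) * card (cls (eqv c) ` Qset k B)"
    unfolding Rp_def by (rule card_cls_prod) simp_all
  ultimately show ?thesis by simp
qed

end


definition Aof :: "nat \<Rightarrow> nat \<Rightarrow> nat set \<Rightarrow> nat set" where
  "Aof n k B = {1..n} - insert (k + 1) B"

definition Idx :: "nat \<Rightarrow> nat \<Rightarrow> nat \<Rightarrow> (nat \<times> nat set) set" where
  "Idx c k n = Sigma {c * k + 2..n} (\<lambda>j. {B. B \<subseteq> {k + 2..n} \<and> card B = n - j})"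

lemma card_Aof:
  assumes B: "B \<subseteq> {k + 2..n}" and cB: "card B = n - j" and j: "1 \<le> j" "j \<le> n" and kn: "k + 1 \<le> n"
  shows "card (Aof n k B) = j - 1"
proof -
  have fB: "finite B" using B finite_subset by blast
  have nB: "k + 1 \<notin> B" using B by auto
  have sub: "insert (k + 1) B \<subseteq> {1..n}" using B kn by auto
  have "card (insert (k + 1) B) = n - j + 1" using fB nB cB by simp
  moreover have "card ({1..n} - insert (k+1) B) = card {1..n} - card (insert (k+1) B)"
    by (rule card_Diff_subset) (use sub fB in auto)
  ultimately show ?thesis unfolding Aof_def using j by simp
qed

lemma dec_inst:
  assumes c1: "1 \<le> c" and k1: "1 \<le> k" and n: "c * k + 1 < n" and jB: "(j, B) \<in> Idx c k n"
  shows "dec c k (Aof n k B) B" "card (Aof n k B) = j - 1"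
proof -
  have j: "c * k + 2 \<le> j" "j \<le> n" and B: "B \<subseteq> {k + 2..n}" "card B = n - j"
    using jB by (auto simp: Idx_def)
  have kk: "k \<le> c * k" using c1 by simp
  have cA: "card (Aof n k B) = j - 1" using card_Aof[OF B(1) B(2)] j kk n by simp
  show "card (Aof n k B) = j - 1" by (rule cA)
  show "dec c k (Aof n k B) B"
    by (unfold_locales) (use c1 cA j in \<open>auto simp: Aof_def\<close>)
qed


lemma decomp_sub:
  assumes c1: "1 \<le> c" and k1: "1 \<le> k" and n: "c * k + 1 < n"
    and x: "x \<in> SQ c k n" and nx: "x \<notin> SQ c (k + 1) n"
  shows "\<exists>jB\<in>Idx c k n. x \<in> Wg c k (Aof n k (snd jB)) (snd jB)"
proof -
  have dx: "distinct x" and sx: "set x = {1..n}" and sq: "squished c k x"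
    using x by (auto simp: SQ_def perms_def)
  have lx: "length x = n" using dx sx by (metis card_atLeastAtMost diff_Suc_1 distinct_card)
  have kk: "k \<le> c * k" using c1 by simp
  have kn: "k + 1 \<le> n" using n kk by linarith
  have "k + 1 \<in> set x" using sx kn by simp
  then obtain i where i: "i < n" "x ! i = k + 1" using lx by (metis in_set_conv_nth)
  have ick: "c * k + 1 \<le> i"
  proof (rule ccontr)
    assume "\<not> c * k + 1 \<le> i"
    then have ile: "i \<le> c * k" by simp
    have "squished c (k + 1) x" unfolding sq_pos
    proof (intro allI impI)
      fix j assume j: "1 \<le> j \<and> j \<le> k + 1 \<and> j \<le> length x"
      show "\<exists>i<length x. i \<le> c * (j - 1) \<and> x ! i = j"
      proof (cases "j \<le> k")
        case True then show ?thesis using sq j unfolding sq_pos by blast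
      next
        case False then have "j = k + 1" using j by simp
        then show ?thesis using i ile lx by auto
      qed
    qed
    then show False using nx x by (simp add: SQ_def)
  qed
  define p where "p = take i x"
  define q where "q = drop i x"
  define B where "B = set (drop (i + 1) x)"
  define j where "j = i + 1"
  have xpq: "x = p @ q" by (simp add: p_def q_def)
  have qc: "q = (k + 1) # drop (i + 1) x" using i lx by (simp add: q_def Cons_nth_drop_Suc[symmetric])
  have small_idx: "t \<le> c * (k - 1)" if "t < n" "x ! t \<le> k" for t
  proof -
    have m1: "1 \<le> x ! t" using that sx lx by (metis atLeastAtMost_iff nth_mem)
    have "t \<le> c * (x ! t - 1)" by (rule sq_idx[OF sq dx m1 that(2)]) (use that kn lx in auto)
    also have "\<dots> \<le> c * (k - 1)" using that(2) by (intro mult_le_mono2) simp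
    finally show ?thesis .
  qed
  have ck: "c * (k - 1) < c * k + 1" by (simp add: diff_mult_distrib2)
  have Bsub: "B \<subseteq> {k + 2..n}"
  proof
    fix y assume "y \<in> B"
    then obtain t where t: "t < length (drop (i + 1) x)" "drop (i + 1) x ! t = y"
      unfolding B_def by (metis in_set_conv_nth)
    define t' where "t' = i + 1 + t"
    have t': "t' < n" "x ! t' = y" using t lx by (auto simp: t'_def)
    have yn: "y \<in> {1..n}" using t' sx lx by (metis nth_mem)
    have "y \<noteq> k + 1" using t' i dx lx distinct_idx[OF dx, of t' i] by (auto simp: t'_def)
    moreover have "\<not> y \<le> k"
    proof
      assume "y \<le> k"
      then have "t' \<le> c * (k - 1)" using small_idx t' by simp
      then show False using ick ck t'_def by linarith
    qed
    ultimately show "y \<in> {k + 2..n}" using yn by auto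
  qed
  have cB: "card B = n - j" unfolding B_def j_def using dx lx by (simp add: distinct_card distinct_drop)
  have jI: "(j, B) \<in> Idx c k n" using Bsub cB ick i by (auto simp: Idx_def j_def)
  have sq_: "set q = insert (k + 1) B" using qc B_def by simp
  have pP: "p \<in> Pset c k (Aof n k B)"
  proof -
    have dp: "distinct p" using dx by (simp add: p_def)
    have "set p = set x - set q" using dx xpq by auto
    then have sp: "set p = Aof n k B" using sx sq_ by (simp add: Aof_def)
    have lp: "length p = i" using i lx by (simp add: p_def)
    have "squished c k p" unfolding sq_pos
    proof (intro allI impI)
      fix j' assume j': "1 \<le> j' \<and> j' \<le> k \<and> j' \<le> length p"
      then obtain t where t: "t < length x" "t \<le> c * (j' - 1)" "x ! t = j'"
        using sq lp i lx unfolding sq_pos by (metis less_imp_le_nat order.trans)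
      have "t \<le> c * (k - 1)" using small_idx t j' lx by simp
      then have "t < length p" using lp ick ck by linarith
      then show "\<exists>t<length p. t \<le> c * (j' - 1) \<and> p ! t = j'" using t by (auto simp: p_def)
    qed
    then show ?thesis using dp sp by (simp add: Pset_def)
  qed
  have dq: "distinct q" using dx by (simp add: q_def)
  have hq: "hd q = k + 1" using qc by simp
  have qQ: "q \<in> Qset k B" using dq sq_ hq by (simp add: Qset_def)
  have "x \<in> Wg c k (Aof n k B) B" using pP qQ xpq by (auto simp: Wg_def)
  then show ?thesis using jI by force
qed


lemma decomp_sup:
  assumes c1: "1 \<le> c" and k1: "1 \<le> k" and n: "c * k + 1 < n"
    and jB: "(j, B) \<in> Idx c k n" and x: "x \<in> Wg c k (Aof n k B) B"
  shows "x \<in> SQ c k n - SQ c (k + 1) n"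
proof -
  obtain p q where x': "x = p @ q" "p \<in> Pset c k (Aof n k B)" "q \<in> Qset k B"
    using x by (auto simp: Wg_def)
  have dc: "dec c k (Aof n k B) B" and cA: "card (Aof n k B) = j - 1"
    using dec_inst[OF c1 k1 n jB] by auto
  have j: "c * k + 2 \<le> j" "j \<le> n" and B: "B \<subseteq> {k + 2..n}" using jB by (auto simp: Idx_def)
  have kk: "k \<le> c * k" using c1 by simp
  have kn: "k + 1 \<le> n" using n kk by linarith
  have dp: "distinct p" and sp: "set p = Aof n k B" and sqp: "squished c k p"
    using x' by (auto simp: Pset_def)
  have dq: "distinct q" and sq_: "set q = insert (k + 1) B" and hq: "hd q = k + 1"
    using x' by (auto simp: Qset_def)
  have lp: "length p = j - 1" using dp sp cA by (metis distinct_card)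
  have sub: "insert (k + 1) B \<subseteq> {1..n}" using B kn by auto
  have dx: "distinct x" using x' dp dq sp sq_ by (auto simp: Aof_def)
  have sx: "set x = {1..n}" using x' sp sq_ sub by (auto simp: Aof_def)
  have lx: "length x = n" using dx sx by (metis card_atLeastAtMost diff_Suc_1 distinct_card)
  have sqx: "squished c k x" unfolding sq_pos
  proof (intro allI impI)
    fix j' assume j': "1 \<le> j' \<and> j' \<le> k \<and> j' \<le> length x"
    have "j' \<in> Aof n k B" using j' B lx by (auto simp: Aof_def)
    have "j' \<le> length p" using j' lp j kk by linarith
    then obtain t where t: "t < length p" "t \<le> c * (j' - 1)" "p ! t = j'"
      using sqp j' unfolding sq_pos by blast
    then show "\<exists>t<length x. t \<le> c * (j' - 1) \<and> x ! t = j'"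
      using x' by (auto simp: nth_append intro!: exI[of _ t])
  qed
  have qn: "q \<noteq> []" using sq_ by auto
  have xk: "x ! length p = k + 1" using x' qn hq by (simp add: nth_append hd_conv_nth)
  have "\<not> squished c (k + 1) x"
  proof
    assume "squished c (k + 1) x"
    then obtain t where t: "t < length x" "t \<le> c * (k + 1 - 1)" "x ! t = k + 1"
      using kn lx unfolding sq_pos by (metis le_add2 order_refl)
    have "length p < length x" using x' qn by simp
    then have "t = length p" using distinct_idx[OF dx t(1)] t(3) xk by simp
    then show False using t(2) lp j by simp
  qed
  then show ?thesis using sqx dx sx by (simp add: SQ_def perms_def)
qed

lemma W_disj:
  assumes k1: "1 \<le> k" and jB: "(j, B) \<in> Idx c k n" and jB': "(j', B') \<in> Idx c k n"
    and x: "x \<in> Wg c k (Aof n k B) B" and x': "x \<in> Wg c k (Aof n k B') B'"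
  shows "(j, B) = (j', B')"
proof -
  obtain p q where pq: "x = p @ q" "p \<in> Pset c k (Aof n k B)" "q \<in> Qset k B"
    using x by (auto simp: Wg_def)
  obtain p' q' where pq': "x = p' @ q'" "p' \<in> Pset c k (Aof n k B')" "q' \<in> Qset k B'"
    using x' by (auto simp: Wg_def)
  have n1: "k + 1 \<notin> set p" using pq by (auto simp: Pset_def Aof_def)
  have n2: "k + 1 \<notin> set p'" using pq' by (auto simp: Pset_def Aof_def)
  have h1: "q \<noteq> []" "hd q = k + 1" using pq by (auto simp: Qset_def)
  have h2: "q' \<noteq> []" "hd q' = k + 1" using pq' by (auto simp: Qset_def)
  have "p = p'"
  proof -
    from pq(1) pq'(1) have e: "p @ q = p' @ q'" by simp
    obtain us where "(p = p' @ us \<and> us @ q = q') \<or> (p @ us = p' \<and> q = us @ q')"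
      using append_eq_append_conv2[of p q p' q', THEN iffD1, OF e] by blast
    then show ?thesis
    proof
      assume a: "p = p' @ us \<and> us @ q = q'"
      show ?thesis
      proof (cases us)
        case Nil then show ?thesis using a by simp
      next
        case (Cons u us')
        then have "q' = u # (us' @ q)" using a by simp
        then have "u = k + 1" using h2 by simp
        then show ?thesis using a Cons n1 by simp
      qed
    next
      assume a: "p @ us = p' \<and> q = us @ q'"
      show ?thesis
      proof (cases us)
        case Nil then show ?thesis using a by simp
      next
        case (Cons u us')
        then have "q = u # (us' @ q')" using a by simp
        then have "u = k + 1" using h1 by simp
        then show ?thesis using a Cons n2 by auto
      qed
    qed
  qed
  then have "q = q'" using pq(1) pq'(1) by simp
  then have "insert (k + 1) B = insert (k + 1) B'" using pq(3) pq'(3) by (simp add: Qset_def)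
  moreover have "k + 1 \<notin> B" "k + 1 \<notin> B'" using jB jB' by (auto simp: Idx_def)
  ultimately have BB: "B = B'" by (metis insert_ident)
  have "card B = n - j" "j \<le> n" "card B' = n - j'" "j' \<le> n" using jB jB' by (auto simp: Idx_def)
  then have "j = j'" using BB by simp
  then show ?thesis using BB by simp
qed


lemma caseC:
  assumes c1: "1 \<le> c" and k1: "1 \<le> k" and n: "c * k + 1 < n"
  shows "gcount c k n = gcount c (k + 1) n +
       (\<Sum>j = c * k + 2..n. gcount c k (j - 1) * gcount c 1 (n - j + 1) *
          ((n - k - 1) choose (n - j)))"
proof -
  define S where "S = SQ c k n"
  define T where "T = SQ c (k + 1) n"
  define Bs where "Bs = (\<lambda>j. {B. B \<subseteq> {k + 2..n} \<and> card B = n - j})"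
  define F where "F = (\<lambda>j. gcount c k (j - 1) * gcount c 1 (n - j + 1))"
  define Wi where "Wi = (\<lambda>jB :: nat \<times> nat set. Wg c k (Aof n k (snd jB)) (snd jB))"
  have TS: "T \<subseteq> S" unfolding S_def T_def SQ_def using sq_mono by auto
  have split: "card (cls (eqv c) ` S) = card (cls (eqv c) ` T) + card (cls (eqv c) ` (S - T))"
    by (rule card_cls_diff) (use finite_SQ closed_SQ TS in \<open>simp_all add: S_def T_def eqv_symm\<close>)
  have dec: "S - T = (\<Union>jB\<in>Idx c k n. Wi jB)"
  proof
    show "S - T \<subseteq> (\<Union>jB\<in>Idx c k n. Wi jB)"
      using decomp_sub[OF c1 k1 n] by (auto simp: S_def T_def Wi_def)
    show "(\<Union>jB\<in>Idx c k n. Wi jB) \<subseteq> S - T"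
      using decomp_sup[OF c1 k1 n] by (force simp: S_def T_def Wi_def)
  qed
  have fI: "finite (Idx c k n)"
    unfolding Idx_def by (rule finite_SigmaI) (auto intro: finite_subset[of _ "Pow {k + 2..n}"])
  have WiS: "Wi jB \<subseteq> S - T" if "jB \<in> Idx c k n" for jB using dec that by auto
  have fS: "finite S" by (simp add: S_def finite_SQ)
  have cU: "card (cls (eqv c) ` (\<Union>jB\<in>Idx c k n. Wi jB)) = (\<Sum>jB\<in>Idx c k n. card (cls (eqv c) ` Wi jB))"
  proof (rule card_cls_UN[OF fI])
    show "\<forall>i\<in>Idx c k n. finite (Wi i)" using WiS fS by (meson finite_Diff finite_subset)
    show "\<forall>i\<in>Idx c k n. eclosed (eqv c) (Wi i)"
    proof
      fix jB assume "jB \<in> Idx c k n"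
      then have "dec c k (Aof n k (snd jB)) (snd jB)"
        using dec_inst[OF c1 k1 n, of "fst jB" "snd jB"] by simp
      then show "eclosed (eqv c) (Wi jB)" unfolding Wi_def by (rule dec.W_closed)
    qed
    show "\<forall>i\<in>Idx c k n. \<forall>j\<in>Idx c k n. i \<noteq> j \<longrightarrow> Wi i \<inter> Wi j = {}"
    proof (intro ballI impI)
      fix i j assume ij: "i \<in> Idx c k n" "j \<in> Idx c k n" "i \<noteq> j"
      show "Wi i \<inter> Wi j = {}"
      proof (rule ccontr)
        assume "Wi i \<inter> Wi j \<noteq> {}"
        then obtain x where "x \<in> Wi i" "x \<in> Wi j" by auto
        then have "(fst i, snd i) = (fst j, snd j)"
          using W_disj[OF k1, of "fst i" "snd i" c n "fst j" "snd j" x] ij by (simp add: Wi_def)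
        then show False using ij by (simp add: prod_eq_iff)
      qed
    qed
    show "\<forall>x. eqv c x x" by simp
  qed
  have each: "card (cls (eqv c) ` Wi jB) = F (fst jB)" if jB: "jB \<in> Idx c k n" for jB
  proof -
    obtain j B where jBe: "jB = (j, B)" by (cases jB)
    have jBI: "(j, B) \<in> Idx c k n" using jB jBe by simp
    have dc: "dec c k (Aof n k B) B" and cA: "card (Aof n k B) = j - 1"
      using dec_inst[OF c1 k1 n jBI] by auto
    have j: "c * k + 2 \<le> j" "j \<le> n" and B: "B \<subseteq> {k + 2..n}" "card B = n - j"
      using jBI by (auto simp: Idx_def)
    have "card (cls (eqv c) ` Wi jB) = card (cls (eqv c) ` Pset c k (Aof n k B)) * card (cls (eqv c) ` Qset k B)"
      using dec.W_card[OF dc] jBe by (simp add: Wi_def)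
    also have "card (cls (eqv c) ` Pset c k (Aof n k B)) = gcount c k (j - 1)"
    proof -
      have kk: "k \<le> c * k" using c1 by simp
      have kj: "k \<le> j - 1" using kk j by linarith
      have kn': "k \<le> n" using kk j by linarith
      have "card (cls (eqv c) ` Pset c k (Aof n k B)) = gcount c k (card (Aof n k B))"
        by (rule count_P) (use B kj kn' cA in \<open>auto simp: Aof_def\<close>)
      then show ?thesis using cA by simp
    qed
    also have "card (cls (eqv c) ` Qset k B) = gcount c 1 (n - j + 1)"
    proof -
      have fB: "finite B" using B(1) finite_subset by blast
      have "card (cls (eqv c) ` Qset k B) = gcount c 1 (card B + 1)"
        by (rule count_Q[OF fB]) (use B in auto)
      then show ?thesis using B(2) by simp
    qed
    finally show ?thesis using jBe by (simp add: F_def)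
  qed
  have "(\<Sum>jB\<in>Idx c k n. card (cls (eqv c) ` Wi jB)) = (\<Sum>jB\<in>Idx c k n. F (fst jB))"
    using each by (rule sum.cong[OF refl])
  also have "\<dots> = (\<Sum>j = c * k + 2..n. \<Sum>B\<in>Bs j. F j)"
    unfolding Idx_def Bs_def[symmetric]
    by (subst sum.Sigma) (auto simp: Bs_def intro: finite_subset[of _ "Pow {k + 2..n}"] simp: case_prod_beta)
  also have "\<dots> = (\<Sum>j = c * k + 2..n. F j * ((n - k - 1) choose (n - j)))"
  proof (rule sum.cong[OF refl])
    fix j assume "j \<in> {c * k + 2..n}"
    have "card (Bs j) = card {k + 2..n} choose (n - j)" unfolding Bs_def by (rule n_subsets) simp
    then have "card (Bs j) = (n - k - 1) choose (n - j)" by simp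
    then show "(\<Sum>B\<in>Bs j. F j) = F j * ((n - k - 1) choose (n - j))" by simp
  qed
  finally have sumeq: "card (cls (eqv c) ` (S - T)) = (\<Sum>j = c * k + 2..n. F j * ((n - k - 1) choose (n - j)))"
    using dec cU by simp
  show ?thesis
    unfolding gcount_eq[of c k n] gcount_eq[of c "k+1" n]
    using split sumeq by (simp add: S_def T_def F_def gcount_eq)
qed


theorem lemma3p3:
  fixes c k n :: nat
  assumes "c \<ge> 1" and "k \<ge> 1" and "n \<ge> 1"
  shows "gcount c k n =
    (if n < c + 1 then fact (n - 1)
     else if n \<le> c * k + 1 then 1
     else gcount c (k + 1) n +
       (\<Sum>j = c * k + 2..n. gcount c k (j - 1) * gcount c 1 (n - j + 1) *
          ((n - k - 1) choose (n - j))))"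
proof (cases "n < c + 1")
  case True
  then show ?thesis using caseA[OF assms(3) True assms(2)] by simp
next
  case False
  show ?thesis
  proof (cases "n \<le> c * k + 1")
    case True
    then show ?thesis using caseB[OF assms(1) _ True assms(2)] False by simp
  next
    case False2: False
    then show ?thesis using caseC[OF assms(1) assms(2)] False by simp
  qed
qed

end
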